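(* In the setting below, let $q_1,q_2,q_3>0$ with $q_2=q_3$, let $\psi_1,\psi_2,\psi_3>0$, $\eta_1,\eta_2,\eta_3>0$, and $\sigma\in\mathcal{K}$. All inequalities below are required to hold along every solution at every time $t\ge0$ (with $\boldsymbol{u}=\boldsymbol{u}(t,\cdot)$, $\boldsymbol{d}=\boldsymbol{d}(t,\cdot)$), with summation over repeated $j$. (I) If, for solutions with $\boldsymbol{d}\equiv0$, $\sum_{i=1}^3\int_\Omega\big((\frac{q_iC}{Re}-1)u_i^2+q_iU_ju_i\partial_{x_j}u_i+q_iu_ju_i\partial_{x_j}U_i-q_iu_iF_{ij}u_j\big)d\Omega\ge0,$ then every solution with $\boldsymbol{d}\equiv0$ satisfies $\|\boldsymbol{u}\|_{\mathcal{L}^2_{[0,\infty),\Omega}}\le\gamma\|\boldsymbol{u}(0,\cdot)\|_{\mathcal{L}^2_\Omega}$ with $\gamma^2=\max_i q_i$. (II) If $\sum_{i=1}^3\int_\Omega\big((\frac{q_iC}{Re}-1)u_i^2+q_iU_ju_i\partial_{x_j}u_i+q_iu_ju_i\partial_{x_j}U_i-q_iu_iF_{ij}u_j-q_iu_id_i+\eta_i^2d_i^2\big)d\Omega\ge0,$ then every solution with $\boldsymbol{u}(0,\cdot)\equiv0$ satisfies $\|\boldsymbol{u}\|^2_{\mathcal{L}^2_{[0,\infty),\Omega}}\le\sum_{i=1}^3\eta_i^2\|d_i\|^2_{\mathcal{L}^2_{[0,\infty),\Omega}}$. (III) If $\sum_{i=1}^3\int_\Omega\big((\frac{q_iC}{Re}-\psi_iq_i)u_i^2+q_iU_ju_i\partial_{x_j}u_i+q_iu_ju_i\partial_{x_j}U_i-q_iu_iF_{ij}u_j-q_iu_id_i\big)d\Omega+\int_\Omega\sigma(|\boldsymbol{d}|)d\Omega\ge0,$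 then there exist $\psi>0$ and $\beta,\tilde\beta,\chi\in\mathcal{K}_\infty$ such that every solution satisfies, for all $t>0$, $\|\boldsymbol{u}(t,\cdot)\|_{\mathcal{L}^2_\Omega}\le\beta\big(e^{-\psi t}\chi(\|\boldsymbol{u}(0,\cdot)\|_{\mathcal{L}^2_\Omega})\big)+\tilde\beta\big(\sup_{\tau\in[0,t)}\int_\Omega\sigma(|\boldsymbol{d}(\tau,\mathrm{x})|)d\Omega\big)$.
   Context: Setting (channel flows). Fix $Re>0$ and a constant matrix $F=(F_{ij})\in\mathbb{R}^{3\times3}$. Coordinates $x=(x_1,x_2,x_3)$ (streamwise, wall-normal, spanwise). All perturbation fields are independent of $x_1$ and defined on a cross-section $\Omega\subset\mathbb{R}^2$ in the variables $\mathrm{x}=(x_2,x_3)$, where either (a) $\Omega$ is a bounded Lipschitz domain and $\boldsymbol{u}=0$ on $\partial\Omega$, or (b) $\Omega=(a,b)\times(0,L)$ with $\boldsymbol{u}=0$ at $x_2\in\{a,b\}$ and all fields $L$-periodic in $x_3$. The base flow is a smooth steady divergence-free field $\boldsymbol{U}=(U_1,U_2,U_3)$ depending only on $(x_2,x_3)$, with pressure $P$, satisfying $0=\frac1{Re}\nabla^2\boldsymbol{U}-\boldsymbol{U}\cdot\nabla\boldsymbol{U}-\nabla P+F\boldsymbol{U}$. A solution is a sufficiently smooth global triple: perturbation velocity $\boldsymbol{u}=(u_1,u_2,u_3):[0,\infty)\times\Omega\to\mathbb{R}^3$, perturbation pressure $p$, forcing $\boldsymbol{d}=(d_1,d_2,d_3):[0,\infty)\times\Omega\to\mathbb{R}^3$,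 all independent of $x_1$, satisfying the boundary conditions and $$\partial_t u_i=\tfrac1{Re}\nabla^2u_i-u_j\partial_{x_j}u_i-U_j\partial_{x_j}u_i-u_j\partial_{x_j}U_i-\partial_{x_i}p+F_{ij}u_j+d_i\ (i=1,2,3),\qquad \partial_{x_j}u_j=0,$$ with summation over repeated $j\in\{1,2,3\}$ and $\partial_{x_1}\equiv0$ on perturbation quantities. $C>0$ denotes a constant for which the Poincaré inequality $\int_\Omega|\nabla w|^2d\Omega\ge C\int_\Omega w^2d\Omega$ holds for every smooth $w:\Omega\to\mathbb{R}$ satisfying the boundary conditions above. Norms: $\|v\|_{\mathcal{L}^2_\Omega}=(\int_\Omega|v|^2d\Omega)^{1/2}$, $\|v\|_{\mathcal{L}^2_{[0,\infty),\Omega}}=(\int_0^\infty\int_\Omega|v|^2d\Omega\,dt)^{1/2}$, $|\cdot|$ Euclidean norm. $\mathcal{K}$: continuous strictly increasing $f:[0,\infty)\to[0,\infty)$ with $f(0)=0$; $\mathcal{K}_\infty$: functions in $\mathcal{K}$ that are unbounded. *)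

theory Defs
  imports "HOL-Analysis.Analysis"
begin

text \<open>
  Cross-section points are pairs x = (x2, x3) :: real \<times> real.
  Vector fields are indexed by natural numbers; only the components 1, 2, 3 are used.
  A perturbation field has type nat \<Rightarrow> real \<Rightarrow> real \<times> real \<Rightarrow> real (component, time, point);
  a steady base-flow field has type nat \<Rightarrow> real \<times> real \<Rightarrow> real.
  Independence of x1 is built into the representation; derivatives in x1 are zero.
\<close>

fun iterD :: "'a::real_normed_vector list \<Rightarrow> ('a \<Rightarrow> real) \<Rightarrow> 'a \<Rightarrow> real" where
  "iterD [] g = g"
| "iterD (v # vs) g = (\<lambda>p. frechet_derivative (iterD vs g) (at p) v)"

definition smooth_on :: "'a::real_normed_vector set \<Rightarrow> ('a \<Rightarrow> real) \<Rightarrow> bool" where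
  "smooth_on S g \<longleftrightarrow>
     (\<exists>T. open T \<and> S \<subseteq> T \<and> (\<forall>vs. \<forall>p\<in>T. iterD vs g differentiable (at p)))"

definition dt :: "(real \<Rightarrow> real \<times> real \<Rightarrow> real) \<Rightarrow> real \<Rightarrow> real \<times> real \<Rightarrow> real" where
  "dt f t x = frechet_derivative (\<lambda>(s, y). f s y) (at (t, x)) (1, (0, 0))"

definition sdx :: "nat \<Rightarrow> (real \<times> real \<Rightarrow> real) \<Rightarrow> real \<times> real \<Rightarrow> real" where
  "sdx j w x =
     (if j = 2 then frechet_derivative w (at x) (1, 0)
      else if j = 3 then frechet_derivative w (at x) (0, 1)
      else 0)"

definition slap :: "(real \<times> real \<Rightarrow> real) \<Rightarrow> real \<times> real \<Rightarrow> real" where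
  "slap w x = sdx 2 (sdx 2 w) x + sdx 3 (sdx 3 w) x"

definition dx :: "nat \<Rightarrow> (real \<Rightarrow> real \<times> real \<Rightarrow> real) \<Rightarrow> real \<Rightarrow> real \<times> real \<Rightarrow> real" where
  "dx j f t x = sdx j (f t) x"

definition lap :: "(real \<Rightarrow> real \<times> real \<Rightarrow> real) \<Rightarrow> real \<Rightarrow> real \<times> real \<Rightarrow> real" where
  "lap f t x = slap (f t) x"

definition rot :: "real \<Rightarrow> real \<times> real \<Rightarrow> real \<times> real" where
  "rot \<theta> y = (cos \<theta> * fst y - sin \<theta> * snd y, sin \<theta> * fst y + cos \<theta> * snd y)"

definition lipschitz_domain :: "(real \<times> real) set \<Rightarrow> bool" where
  "lipschitz_domain \<Omega> \<longleftrightarrow>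
     open \<Omega> \<and> connected \<Omega> \<and> \<Omega> \<noteq> {} \<and> bounded \<Omega> \<and>
     (\<forall>p\<in>frontier \<Omega>. \<exists>\<theta> r h L \<gamma>.
        0 < r \<and> 0 < h \<and> L-lipschitz_on UNIV \<gamma> \<and> \<gamma> 0 = 0 \<and>
        (\<forall>s. \<bar>s\<bar> < r \<longrightarrow> \<bar>\<gamma> s\<bar> < h) \<and>
        (\<forall>y1 y2. \<bar>y1\<bar> < r \<and> \<bar>y2\<bar> < h \<longrightarrow>
           (p + rot \<theta> (y1, y2) \<in> \<Omega> \<longleftrightarrow> y2 < \<gamma> y1)))"

text \<open>The two admissible geometries: (a) a bounded Lipschitz domain with no-slip boundary,
  (b) a periodic channel (a, b) \<times> (0, L), no-slip at x2 = a, b and L-periodic in x3.\<close>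

datatype geometry = Bounded "(real \<times> real) set" | Periodic real real real

fun valid_geometry :: "geometry \<Rightarrow> bool" where
  "valid_geometry (Bounded \<Omega>) = lipschitz_domain \<Omega>"
| "valid_geometry (Periodic a b L) = (a < b \<and> 0 < L)"

fun dom :: "geometry \<Rightarrow> (real \<times> real) set" where
  "dom (Bounded \<Omega>) = \<Omega>"
| "dom (Periodic a b L) = {a<..<b} \<times> {0<..<L}"

fun region :: "geometry \<Rightarrow> (real \<times> real) set" where
  "region (Bounded \<Omega>) = closure \<Omega>"
| "region (Periodic a b L) = {a..b} \<times> UNIV"

fun periodic_field :: "geometry \<Rightarrow> (real \<times> real \<Rightarrow> real) \<Rightarrow> bool" where
  "periodic_field (Bounded \<Omega>) w = True"
| "periodic_field (Periodic a b L) w = (\<forall>y z. w (y, z + L) = w (y, z))"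

fun bc :: "geometry \<Rightarrow> (real \<times> real \<Rightarrow> real) \<Rightarrow> bool" where
  "bc (Bounded \<Omega>) w = (\<forall>x\<in>frontier \<Omega>. w x = 0)"
| "bc (Periodic a b L) w =
     ((\<forall>z. w (a, z) = 0 \<and> w (b, z) = 0) \<and> (\<forall>y z. w (y, z + L) = w (y, z)))"

text \<open>The pressure may carry a constant streamwise gradient G (P = G x1 + Pt(x2,x3)), which is the
  general form of a steady pressure for an x1-independent velocity.\<close>

definition base_flow ::
  "geometry \<Rightarrow> real \<Rightarrow> (nat \<Rightarrow> nat \<Rightarrow> real) \<Rightarrow> (nat \<Rightarrow> real \<times> real \<Rightarrow> real)
    \<Rightarrow> real \<Rightarrow> (real \<times> real \<Rightarrow> real) \<Rightarrow> bool" where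
  "base_flow g Rey F U G Pt \<longleftrightarrow>
     (\<forall>i\<in>{1..3}. smooth_on (region g) (U i)) \<and> smooth_on (region g) Pt \<and>
     (\<forall>x\<in>dom g. (\<Sum>j\<in>{1..3}. sdx j (U j) x) = 0) \<and>
     (\<forall>i\<in>{1..3}. \<forall>x\<in>dom g.
        0 = 1 / Rey * slap (U i) x - (\<Sum>j\<in>{1..3}. U j x * sdx j (U i) x)
            - (if i = 1 then G else sdx i Pt x) + (\<Sum>j\<in>{1..3}. F i j * U j x))"

definition solution ::
  "geometry \<Rightarrow> real \<Rightarrow> (nat \<Rightarrow> nat \<Rightarrow> real) \<Rightarrow> (nat \<Rightarrow> real \<times> real \<Rightarrow> real)
    \<Rightarrow> (nat \<Rightarrow> real \<Rightarrow> real \<times> real \<Rightarrow> real) \<Rightarrow> (real \<Rightarrow> real \<times> real \<Rightarrow> real)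
    \<Rightarrow> (nat \<Rightarrow> real \<Rightarrow> real \<times> real \<Rightarrow> real) \<Rightarrow> bool" where
  "solution g Rey F U u p d \<longleftrightarrow>
     (\<forall>i\<in>{1..3}. smooth_on ({0..} \<times> region g) (\<lambda>(t, x). u i t x)) \<and>
     (\<forall>i\<in>{1..3}. smooth_on ({0..} \<times> region g) (\<lambda>(t, x). d i t x)) \<and>
     smooth_on ({0..} \<times> region g) (\<lambda>(t, x). p t x) \<and>
     (\<forall>t\<ge>0. (\<forall>i\<in>{1..3}. bc g (u i t) \<and> periodic_field g (d i t)) \<and> periodic_field g (p t)) \<and>
     (\<forall>t\<ge>0. \<forall>x\<in>dom g. (\<Sum>j\<in>{1..3}. dx j (u j) t x) = 0) \<and>
     (\<forall>i\<in>{1..3}. \<forall>t\<ge>0. \<forall>x\<in>dom g.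
        dt (u i) t x =
          1 / Rey * lap (u i) t x
          - (\<Sum>j\<in>{1..3}. u j t x * dx j (u i) t x)
          - (\<Sum>j\<in>{1..3}. U j x * dx j (u i) t x)
          - (\<Sum>j\<in>{1..3}. u j t x * sdx j (U i) x)
          - dx i p t x
          + (\<Sum>j\<in>{1..3}. F i j * u j t x)
          + d i t x)"

definition L2_sq :: "(real \<times> real) set \<Rightarrow> (nat \<Rightarrow> real \<times> real \<Rightarrow> real) \<Rightarrow> real" where
  "L2_sq \<Omega> v = (LINT x:\<Omega>|lborel. (\<Sum>i\<in>{1..3}. (v i x)\<^sup>2))"

definition L2_norm :: "(real \<times> real) set \<Rightarrow> (nat \<Rightarrow> real \<times> real \<Rightarrow> real) \<Rightarrow> real" where
  "L2_norm \<Omega> v = sqrt (L2_sq \<Omega> v)"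

definition L2st_sq :: "(real \<times> real) set \<Rightarrow> (real \<Rightarrow> real \<times> real \<Rightarrow> real) \<Rightarrow> ennreal" where
  "L2st_sq \<Omega> f = (\<integral>\<^sup>+ t\<in>{0..}. (\<integral>\<^sup>+ x\<in>\<Omega>. ennreal ((f t x)\<^sup>2) \<partial>lborel) \<partial>lborel)"

definition L2st_sq_vec :: "(real \<times> real) set \<Rightarrow> (nat \<Rightarrow> real \<Rightarrow> real \<times> real \<Rightarrow> real) \<Rightarrow> ennreal" where
  "L2st_sq_vec \<Omega> v =
     (\<integral>\<^sup>+ t\<in>{0..}. (\<integral>\<^sup>+ x\<in>\<Omega>. ennreal (\<Sum>i\<in>{1..3}. (v i t x)\<^sup>2) \<partial>lborel) \<partial>lborel)"

definition vnorm :: "(nat \<Rightarrow> real) \<Rightarrow> real" where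
  "vnorm v = sqrt (\<Sum>i\<in>{1..3}. (v i)\<^sup>2)"

definition class_K :: "(real \<Rightarrow> real) \<Rightarrow> bool" where
  "class_K f \<longleftrightarrow> continuous_on {0..} f \<and> strict_mono_on {0..} f \<and> f 0 = 0 \<and>
                  (\<forall>x\<ge>0. f x \<ge> 0)"

definition class_K_inf :: "(real \<Rightarrow> real) \<Rightarrow> bool" where
  "class_K_inf f \<longleftrightarrow> class_K f \<and> \<not> bdd_above (f ` {0..})"

definition poincare_const :: "geometry \<Rightarrow> real \<Rightarrow> bool" where
  "poincare_const g C \<longleftrightarrow>
     (\<forall>w. smooth_on (region g) w \<and> bc g w \<longrightarrow>
        (LINT x:dom g|lborel. (sdx 2 w x)\<^sup>2 + (sdx 3 w x)\<^sup>2) \<ge> C * (LINT x:dom g|lborel. (w x)\<^sup>2))"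

end

theory Submission
  imports Defs
begin

lemma ftc_Ioo:
  fixes \<phi> \<phi>d :: "real \<Rightarrow> real"
  assumes ce: "c \<le> e"
    and der: "\<And>s. c \<le> s \<Longrightarrow> s \<le> e \<Longrightarrow> (\<phi> has_real_derivative \<phi>d s) (at s)"
    and cont: "continuous_on {c..e} \<phi>d"
  shows "(LINT s:{c<..<e}|lborel. \<phi>d s) = \<phi> e - \<phi> c"
proof -
  have "(LBINT x=ereal c..ereal e. \<phi>d x) = (LINT s:{c<..<e}|lborel. \<phi>d s)"
    using ce by (subst interval_integral_Ioo) auto
  moreover have "(LBINT x=ereal c..ereal e. \<phi>d x) = \<phi> e - \<phi> c"
    by (rule interval_integral_FTC_finite)
       (use ce cont der in \<open>auto simp: has_real_derivative_iff_has_vector_derivative[symmetric]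
          intro: has_field_derivative_at_within\<close>)
  ultimately show ?thesis by simp
qed

lemma open_conn_real_Ioo:
  fixes C :: "real set"
  assumes op: "open C" and cn: "connected C" and bd: "bounded C" and ne: "C \<noteq> {}"
  shows "C = {Inf C<..<Sup C}"
proof
  have bb: "bdd_below C" "bdd_above C" using bd bounded_imp_bdd_below bounded_imp_bdd_above by auto
  show "C \<subseteq> {Inf C<..<Sup C}"
  proof
    fix y assume y: "y \<in> C"
    obtain \<epsilon> where e: "\<epsilon> > 0" "ball y \<epsilon> \<subseteq> C" using op y open_contains_ball by blast
    have "y - \<epsilon>/2 \<in> C" "y + \<epsilon>/2 \<in> C" using e by (auto simp: dist_real_def subset_eq)
    hence "Inf C \<le> y - \<epsilon>/2" "y + \<epsilon>/2 \<le> Sup C" using bb by (auto intro: cInf_lower cSup_upper)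
    thus "y \<in> {Inf C<..<Sup C}" using e by auto
  qed
  show "{Inf C<..<Sup C} \<subseteq> C"
  proof
    fix y assume y: "y \<in> {Inf C<..<Sup C}"
    obtain a where a: "a \<in> C" "a < y" using y bb ne by (auto simp: cInf_less_iff)
    obtain b where b: "b \<in> C" "y < b" using y bb ne by (auto simp: less_cSup_iff)
    have "is_interval C" using cn is_interval_connected_1 by blast
    thus "y \<in> C" using mem_is_interval_1_I[where S=C and a=a and c=b and b=y] a b by auto
  qed
qed

lemma component_Ioo:
  fixes U :: "real set"
  assumes op: "open U" and bd: "bounded U" and x: "x \<in> U"
  defines "C \<equiv> connected_component_set U x"
  shows "C = {Inf C<..<Sup C}" "Inf C < Sup C" "Inf C \<in> frontier U" "Sup C \<in> frontier U"
proof -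
  have oC: "open C" using op by (simp add: C_def open_connected_component)
  have cC: "connected C" by (simp add: C_def)
  have sC: "C \<subseteq> U" by (simp add: C_def connected_component_subset)
  have xC: "x \<in> C" using x by (simp add: C_def)
  have bC: "bounded C" using bd sC bounded_subset by blast
  show eq: "C = {Inf C<..<Sup C}" using open_conn_real_Ioo[OF oC cC bC] xC by auto
  show lt: "Inf C < Sup C" using eq xC by (metis greaterThanLessThan_iff less_trans)
  have clC: "closure C = {Inf C..Sup C}" using eq lt by (metis closure_greaterThanLessThan)
  have clU: "closure C \<subseteq> closure U" using sC closure_mono by blast
  have notin: "z \<notin> U" if z: "z = Inf C \<or> z = Sup C" for z
  proof
    assume zU: "z \<in> U"
    obtain \<epsilon> where e: "\<epsilon> > 0" "ball z \<epsilon> \<subseteq> U" using op zU open_contains_ball by blast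
    have zcl: "z \<in> closure C" using clC lt z by auto
    then obtain w where w: "w \<in> C" "dist w z < \<epsilon>" using e(1) closure_approachable by blast
    have "w \<in> ball z \<epsilon>" using w by (simp add: dist_commute)
    hence "ball z \<epsilon> \<inter> C \<noteq> {}" using w(1) by blast
    hence "connected (ball z \<epsilon> \<union> C)"
      using connected_Un[of "ball z \<epsilon>" C] cC by auto
    moreover have "ball z \<epsilon> \<union> C \<subseteq> U" using e sC by auto
    moreover have "x \<in> ball z \<epsilon> \<union> C" using xC by auto
    ultimately have "ball z \<epsilon> \<union> C \<subseteq> C" unfolding C_def
      by (metis C_def connected_component_maximal)
    hence "z - \<epsilon>/2 \<in> C" "z + \<epsilon>/2 \<in> C" using e by (auto simp: dist_real_def subset_eq)
    hence "Inf C < z - \<epsilon>/2" "z + \<epsilon>/2 < Sup C" using eq by (metis greaterThanLessThan_iff)+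
    thus False using z e(1) by linarith
  qed
  show "Inf C \<in> frontier U" "Sup C \<in> frontier U"
    using notin clU clC lt op by (auto simp: frontier_def interior_open)
qed

lemma div1d:
  fixes U :: "real set" and \<phi> \<phi>d :: "real \<Rightarrow> real"
  assumes op: "open U" and bd: "bounded U"
   and der: "\<And>s. s \<in> closure U \<Longrightarrow> (\<phi> has_real_derivative \<phi>d s) (at s)"
   and cont: "continuous_on (closure U) \<phi>d"
   and bdz: "\<And>s. s \<in> frontier U \<Longrightarrow> \<phi> s = 0"
  shows "(LINT s:U|lborel. \<phi>d s) = 0"
proof -
  define r :: "nat \<Rightarrow> real" where "r n = of_rat (nat_to_rat_surj n)" for n
  have rng: "range r = \<rat>" unfolding r_def Rats_eq_range_of_rat_o_nat_to_rat_surj by auto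
  define A where "A n = (if r n \<in> U \<and> (\<forall>m<n. r m \<notin> connected_component_set U (r n))
                          then connected_component_set U (r n) else {})" for n
  have meas: "A n \<in> sets lborel" for n
    using op by (auto simp: A_def open_connected_component)
  have disj: "A i \<inter> A j = {}" if ij: "i \<noteq> j" for i j
  proof -
    { fix n m assume mn: "m < n" and ne: "A n \<inter> A m \<noteq> {}"
      then obtain z where z: "z \<in> A n" "z \<in> A m" by blast
      hence cn: "r n \<in> U" "\<forall>m<n. r m \<notin> connected_component_set U (r n)"
        and zn: "z \<in> connected_component_set U (r n)"
        and zm: "z \<in> connected_component_set U (r m)" and rm: "r m \<in> U"
        by (auto simp: A_def split: if_splits)
      have "connected_component_set U (r n) = connected_component_set U (r m)"
        using zn zm connected_component_eq by metis
      hence False using cn mn rm by auto }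
    thus ?thesis using ij by (metis inf_commute linorder_neqE_nat)
  qed
  have un: "(\<Union>n. A n) = U"
  proof
    show "(\<Union>n. A n) \<subseteq> U" using connected_component_subset by (fastforce simp: A_def split: if_splits)
    show "U \<subseteq> (\<Union>n. A n)"
    proof
      fix x assume x: "x \<in> U"
      let ?C = "connected_component_set U x"
      have "?C = {Inf ?C<..<Sup ?C}" "Inf ?C < Sup ?C" using component_Ioo[OF op bd x] by auto
      then obtain q where q: "q \<in> \<rat>" "q \<in> ?C" using Rats_dense_in_real by (metis greaterThanLessThan_iff)
      then obtain k where k: "r k \<in> ?C" using rng by (metis rangeE)
      define n where "n = (LEAST k. r k \<in> ?C)"
      have rn: "r n \<in> ?C" unfolding n_def using k by (rule LeastI)
      have lt: "\<forall>m<n. r m \<notin> ?C" unfolding n_def using not_less_Least by blast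
      have eqC: "connected_component_set U (r n) = ?C" using rn connected_component_eq by blast
      have rnU: "r n \<in> U" using rn connected_component_subset by blast
      have "A n = ?C" using lt eqC rnU by (simp add: A_def)
      thus "x \<in> (\<Union>n. A n)" using x by auto
    qed
  qed
  have cU: "compact (closure U)" using bd by (simp add: compact_closure)
  have intU: "set_integrable lborel U \<phi>d"
  proof -
    have "set_integrable lborel (closure U) \<phi>d"
      unfolding set_integrable_def using borel_integrable_compact[OF cU cont] by simp
    thus ?thesis by (rule set_integrable_subset) (use op in \<open>auto simp: closure_subset\<close>)
  qed
  have zero: "(LINT s:(A n)|lborel. \<phi>d s) = 0" for n
  proof (cases "A n = {}")
    case True thus ?thesis by (simp add: set_lebesgue_integral_def)
  next
    case False
    hence rn: "r n \<in> U" and An: "A n = connected_component_set U (r n)" by (auto simp: A_def split: if_splits)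
    let ?C = "connected_component_set U (r n)"
    note cp = component_Ioo[OF op bd rn]
    have sub: "{Inf ?C..Sup ?C} \<subseteq> closure U"
    proof -
      have "closure ?C \<subseteq> closure U" by (simp add: closure_mono connected_component_subset)
      thus ?thesis using cp(1,2) closure_greaterThanLessThan by metis
    qed
    have "(LINT s:{Inf ?C<..<Sup ?C}|lborel. \<phi>d s) = \<phi> (Sup ?C) - \<phi> (Inf ?C)"
      by (rule ftc_Ioo) (use cp(2) sub der in \<open>auto intro: continuous_on_subset[OF cont]\<close>)
    also have "\<dots> = 0" using bdz cp(3,4) by simp
    finally show ?thesis using An cp(1) by simp
  qed
  have "(LINT s:U|lborel. \<phi>d s) = (\<Sum>n. (LINT s:(A n)|lborel. \<phi>d s))"
    using lebesgue_integral_countable_add[of A lborel \<phi>d, OF meas disj] intU un by simp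
  thus ?thesis using zero by simp
qed

lemma slice_props:
  fixes \<Omega> :: "(real \<times> real) set" and \<iota> :: "real \<Rightarrow> real \<times> real"
  assumes op: "open \<Omega>" and bd: "bounded \<Omega>"
    and \<iota>: "\<iota> = (\<lambda>a. (a, b)) \<or> \<iota> = (\<lambda>a. (b, a))"
  shows "open (\<iota> -` \<Omega>)" "bounded (\<iota> -` \<Omega>)" "closure (\<iota> -` \<Omega>) \<subseteq> \<iota> -` closure \<Omega>"
    "frontier (\<iota> -` \<Omega>) \<subseteq> \<iota> -` frontier \<Omega>"
proof -
  have ci: "continuous_on UNIV \<iota>" using \<iota> by (auto intro!: continuous_intros)
  show o: "open (\<iota> -` \<Omega>)" using ci op by (metis open_vimage)
  have "bounded (\<iota> -` \<Omega>)"
  proof -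
    obtain B where B: "\<forall>x\<in>\<Omega>. norm x \<le> B" using bd bounded_iff by blast
    have "norm a \<le> B" if "\<iota> a \<in> \<Omega>" for a
    proof -
      have "norm a \<le> norm (\<iota> a)" using \<iota>
        by (auto simp: norm_Pair intro: real_sqrt_le_mono[where x="a\<^sup>2", simplified]) 
      thus ?thesis using B that by force
    qed
    thus ?thesis by (auto simp: bounded_iff)
  qed
  thus "bounded (\<iota> -` \<Omega>)" .
  have cl: "closed (\<iota> -` closure \<Omega>)" using ci by (metis closed_closure closed_vimage)
  show c: "closure (\<iota> -` \<Omega>) \<subseteq> \<iota> -` closure \<Omega>"
    by (rule closure_minimal) (use cl closure_subset in auto)
  show "frontier (\<iota> -` \<Omega>) \<subseteq> \<iota> -` frontier \<Omega>"
    using c o op by (auto simp: frontier_def interior_open)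
qed

lemma div2d_fst:
  fixes f g :: "real \<times> real \<Rightarrow> real" and \<Omega> :: "(real \<times> real) set"
  assumes op: "open \<Omega>" and bd: "bounded \<Omega>"
   and der: "\<And>a b. (a,b) \<in> closure \<Omega> \<Longrightarrow> ((\<lambda>s. f (s,b)) has_real_derivative g (a,b)) (at a)"
   and cont: "continuous_on (closure \<Omega>) g"
   and bdz: "\<And>x. x \<in> frontier \<Omega> \<Longrightarrow> f x = 0"
  shows "(LINT x:\<Omega>|lborel. g x) = 0"
proof -
  let ?h = "\<lambda>x. indicator \<Omega> x *\<^sub>R g x"
  have cU: "compact (closure \<Omega>)" using bd by (simp add: compact_closure)
  have intU: "set_integrable lborel \<Omega> g"
  proof -
    have "set_integrable lborel (closure \<Omega>) g"
      unfolding set_integrable_def using borel_integrable_compact[OF cU cont] by simp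
    thus ?thesis by (rule set_integrable_subset) (use op in \<open>auto simp: closure_subset\<close>)
  qed
  hence int1: "integrable (lborel \<Otimes>\<^sub>M lborel) ?h"
    by (simp add: set_integrable_def lborel_prod)
  have eqh: "(\<lambda>(x,y). ?h (x,y)) = ?h" by auto
  have int2: "integrable (lborel \<Otimes>\<^sub>M lborel) (\<lambda>(x,y). ?h (x,y))"
    by (subst eqh) (rule int1)
  have inner: "(LBINT x. ?h (x,y)) = 0" for y
  proof -
    let ?\<iota> = "\<lambda>a::real. (a, y)"
    note sp = slice_props[OF op bd, of ?\<iota> y, simplified]
    have "(LBINT x. ?h (x,y)) = (LINT x:(?\<iota> -` \<Omega>)|lborel. g (x,y))"
      by (simp add: set_lebesgue_integral_def indicator_def)
    also have "\<dots> = 0"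
    proof (rule div1d[where \<phi>="\<lambda>s. f (s,y)"])
      show "open (?\<iota> -` \<Omega>)" "bounded (?\<iota> -` \<Omega>)" using sp by auto
      show "((\<lambda>s. f (s, y)) has_real_derivative g (s, y)) (at s)" if "s \<in> closure (?\<iota> -` \<Omega>)" for s
        using der that sp(3) by auto
      show "continuous_on (closure (?\<iota> -` \<Omega>)) (\<lambda>s. g (s, y))"
        by (rule continuous_on_compose2[OF cont, of _ ?\<iota>]) (use sp(3) in \<open>auto intro!: continuous_intros\<close>)
      show "f (s, y) = 0" if "s \<in> frontier (?\<iota> -` \<Omega>)" for s
        using bdz that sp(4) by auto
    qed
    finally show ?thesis .
  qed
  have "(LINT x:\<Omega>|lborel. g x) = integral\<^sup>L (lborel \<Otimes>\<^sub>M lborel) ?h"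
    by (simp add: set_lebesgue_integral_def lborel_prod)
  also have "\<dots> = (LBINT y. LBINT x. ?h (x,y))"
    using lborel_pair.Fubini_integral[of "\<lambda>x y. ?h (x,y)", OF int2] lborel_pair.integral_fst'[OF int1]
    by simp
  also have "\<dots> = 0" using inner by simp
  finally show ?thesis .
qed

lemma div2d_snd:
  fixes f g :: "real \<times> real \<Rightarrow> real" and \<Omega> :: "(real \<times> real) set"
  assumes op: "open \<Omega>" and bd: "bounded \<Omega>"
   and der: "\<And>a b. (a,b) \<in> closure \<Omega> \<Longrightarrow> ((\<lambda>s. f (a,s)) has_real_derivative g (a,b)) (at b)"
   and cont: "continuous_on (closure \<Omega>) g"
   and bdz: "\<And>x. x \<in> frontier \<Omega> \<Longrightarrow> f x = 0"
  shows "(LINT x:\<Omega>|lborel. g x) = 0"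
proof -
  let ?h = "\<lambda>x. indicator \<Omega> x *\<^sub>R g x"
  have cU: "compact (closure \<Omega>)" using bd by (simp add: compact_closure)
  have intU: "set_integrable lborel \<Omega> g"
  proof -
    have "set_integrable lborel (closure \<Omega>) g"
      unfolding set_integrable_def using borel_integrable_compact[OF cU cont] by simp
    thus ?thesis by (rule set_integrable_subset) (use op in \<open>auto simp: closure_subset\<close>)
  qed
  hence int2: "integrable (lborel \<Otimes>\<^sub>M lborel) ?h"
    by (simp add: set_integrable_def lborel_prod)
  have inner: "(LBINT y. ?h (x,y)) = 0" for x
  proof -
    let ?\<iota> = "\<lambda>a::real. (x, a)"
    note sp = slice_props[OF op bd, of ?\<iota> x, simplified]
    have "(LBINT y. ?h (x,y)) = (LINT y:(?\<iota> -` \<Omega>)|lborel. g (x,y))"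
      by (simp add: set_lebesgue_integral_def indicator_def)
    also have "\<dots> = 0"
    proof (rule div1d[where \<phi>="\<lambda>s. f (x,s)"])
      show "open (?\<iota> -` \<Omega>)" "bounded (?\<iota> -` \<Omega>)" using sp by auto
      show "((\<lambda>s. f (x, s)) has_real_derivative g (x, s)) (at s)" if "s \<in> closure (?\<iota> -` \<Omega>)" for s
        using der that sp(3) by auto
      show "continuous_on (closure (?\<iota> -` \<Omega>)) (\<lambda>s. g (x, s))"
        by (rule continuous_on_compose2[OF cont, of _ ?\<iota>]) (use sp(3) in \<open>auto intro!: continuous_intros\<close>)
      show "f (x, s) = 0" if "s \<in> frontier (?\<iota> -` \<Omega>)" for s
        using bdz that sp(4) by auto
    qed
    finally show ?thesis .
  qed
  have "(LINT x:\<Omega>|lborel. g x) = integral\<^sup>L (lborel \<Otimes>\<^sub>M lborel) ?h"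
    by (simp add: set_lebesgue_integral_def lborel_prod)
  also have "\<dots> = (LBINT x. LBINT y. ?h (x,y))"
    using lborel_pair.integral_fst'[OF int2] by simp
  also have "\<dots> = 0" using inner by simp
  finally show ?thesis .
qed

lemma fubini_zero_fst:
  fixes g :: "real \<times> real \<Rightarrow> real" and \<Omega> :: "(real \<times> real) set"
  assumes op: "open \<Omega>" and bd: "bounded \<Omega>"
   and cont: "continuous_on (closure \<Omega>) g"
   and inner: "\<And>y. (LINT x:{x. (x,y) \<in> \<Omega>}|lborel. g (x,y)) = 0"
  shows "(LINT x:\<Omega>|lborel. g x) = 0"
proof -
  let ?h = "\<lambda>x. indicator \<Omega> x *\<^sub>R g x"
  have cU: "compact (closure \<Omega>)" using bd by (simp add: compact_closure)
  have intU: "set_integrable lborel \<Omega> g"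
  proof -
    have "set_integrable lborel (closure \<Omega>) g"
      unfolding set_integrable_def using borel_integrable_compact[OF cU cont] by simp
    thus ?thesis by (rule set_integrable_subset) (use op in \<open>auto simp: closure_subset\<close>)
  qed
  hence int1: "integrable (lborel \<Otimes>\<^sub>M lborel) ?h"
    by (simp add: set_integrable_def lborel_prod)
  have eqh: "(\<lambda>(x,y). ?h (x,y)) = ?h" by auto
  have int2: "integrable (lborel \<Otimes>\<^sub>M lborel) (\<lambda>(x,y). ?h (x,y))"
    by (subst eqh) (rule int1)
  have inn: "(LBINT x. ?h (x,y)) = 0" for y
    using inner[of y] by (simp add: set_lebesgue_integral_def indicator_def)
  have "(LINT x:\<Omega>|lborel. g x) = integral\<^sup>L (lborel \<Otimes>\<^sub>M lborel) ?h"
    by (simp add: set_lebesgue_integral_def lborel_prod)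
  also have "\<dots> = (LBINT y. LBINT x. ?h (x,y))"
    using lborel_pair.Fubini_integral[of "\<lambda>x y. ?h (x,y)", OF int2] lborel_pair.integral_fst'[OF int1]
    by simp
  also have "\<dots> = 0" using inn by simp
  finally show ?thesis .
qed

lemma fubini_zero_snd:
  fixes g :: "real \<times> real \<Rightarrow> real" and \<Omega> :: "(real \<times> real) set"
  assumes op: "open \<Omega>" and bd: "bounded \<Omega>"
   and cont: "continuous_on (closure \<Omega>) g"
   and inner: "\<And>x. (LINT y:{y. (x,y) \<in> \<Omega>}|lborel. g (x,y)) = 0"
  shows "(LINT x:\<Omega>|lborel. g x) = 0"
proof -
  let ?h = "\<lambda>x. indicator \<Omega> x *\<^sub>R g x"
  have cU: "compact (closure \<Omega>)" using bd by (simp add: compact_closure)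
  have intU: "set_integrable lborel \<Omega> g"
  proof -
    have "set_integrable lborel (closure \<Omega>) g"
      unfolding set_integrable_def using borel_integrable_compact[OF cU cont] by simp
    thus ?thesis by (rule set_integrable_subset) (use op in \<open>auto simp: closure_subset\<close>)
  qed
  hence int1: "integrable (lborel \<Otimes>\<^sub>M lborel) ?h"
    by (simp add: set_integrable_def lborel_prod)
  have inn: "(LBINT y. ?h (x,y)) = 0" for x
    using inner[of x] by (simp add: set_lebesgue_integral_def indicator_def)
  have "(LINT x:\<Omega>|lborel. g x) = integral\<^sup>L (lborel \<Otimes>\<^sub>M lborel) ?h"
    by (simp add: set_lebesgue_integral_def lborel_prod)
  also have "\<dots> = (LBINT x. LBINT y. ?h (x,y))"
    using lborel_pair.integral_fst'[OF int1] by simp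
  also have "\<dots> = 0" using inn by simp
  finally show ?thesis .
qed

lemma div_per_fst:
  fixes f g :: "real \<times> real \<Rightarrow> real"
  assumes ab: "a < b" and L: "0 < L"
   and der: "\<And>x y. a \<le> x \<Longrightarrow> x \<le> b \<Longrightarrow> 0 \<le> y \<Longrightarrow> y \<le> L \<Longrightarrow>
               ((\<lambda>s. f (s,y)) has_real_derivative g (x,y)) (at x)"
   and cont: "continuous_on ({a..b} \<times> {0..L}) g"
   and bdz: "\<And>z. 0 < z \<Longrightarrow> z < L \<Longrightarrow> f (a,z) = 0" "\<And>z. 0 < z \<Longrightarrow> z < L \<Longrightarrow> f (b,z) = 0"
  shows "(LINT x:({a<..<b} \<times> {0<..<L})|lborel. g x) = 0"
proof (rule fubini_zero_fst)
  show "open ({a<..<b} \<times> {0<..<L::real})" by (simp add: open_Times)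
  show "bounded ({a<..<b} \<times> {0<..<L::real})" by (simp add: bounded_Times)
  show "continuous_on (closure ({a<..<b} \<times> {0<..<L})) g" using cont ab L by (simp add: closure_Times)
  fix y
  show "(LINT x:{x. (x,y) \<in> {a<..<b} \<times> {0<..<L}}|lborel. g (x,y)) = 0"
  proof (cases "y \<in> {0<..<L}")
    case True
    hence "{x. (x,y) \<in> {a<..<b} \<times> {0<..<L}} = {a<..<b}" by auto
    moreover have "(LINT x:{a<..<b}|lborel. g (x,y)) = f (b,y) - f (a,y)"
      by (rule ftc_Ioo) (use ab True der in \<open>auto intro!: continuous_on_compose2[OF cont] continuous_intros\<close>)
    ultimately show ?thesis using bdz True by simp
  next
    case False
    hence "{x. (x,y) \<in> {a<..<b} \<times> {0<..<L}} = {}" by auto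
    thus ?thesis by (simp add: set_lebesgue_integral_def)
  qed
qed

lemma div_per_snd:
  fixes f g :: "real \<times> real \<Rightarrow> real"
  assumes ab: "a < b" and L: "0 < L"
   and der: "\<And>x y. a \<le> x \<Longrightarrow> x \<le> b \<Longrightarrow> 0 \<le> y \<Longrightarrow> y \<le> L \<Longrightarrow>
               ((\<lambda>s. f (x,s)) has_real_derivative g (x,y)) (at y)"
   and cont: "continuous_on ({a..b} \<times> {0..L}) g"
   and per: "\<And>x. a < x \<Longrightarrow> x < b \<Longrightarrow> f (x,L) = f (x,0)"
  shows "(LINT x:({a<..<b} \<times> {0<..<L})|lborel. g x) = 0"
proof (rule fubini_zero_snd)
  show "open ({a<..<b} \<times> {0<..<L::real})" by (simp add: open_Times)
  show "bounded ({a<..<b} \<times> {0<..<L::real})" by (simp add: bounded_Times)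
  show "continuous_on (closure ({a<..<b} \<times> {0<..<L})) g" using cont ab L by (simp add: closure_Times)
  fix x
  show "(LINT y:{y. (x,y) \<in> {a<..<b} \<times> {0<..<L}}|lborel. g (x,y)) = 0"
  proof (cases "x \<in> {a<..<b}")
    case True
    hence "{y. (x,y) \<in> {a<..<b} \<times> {0<..<L}} = {0<..<L}" by auto
    moreover have "(LINT y:{0<..<L}|lborel. g (x,y)) = f (x,L) - f (x,0)"
      by (rule ftc_Ioo) (use L True der in \<open>auto intro!: continuous_on_compose2[OF cont] continuous_intros\<close>)
    ultimately show ?thesis using per True by simp
  next
    case False
    hence "{y. (x,y) \<in> {a<..<b} \<times> {0<..<L}} = {}" by auto
    thus ?thesis by (simp add: set_lebesgue_integral_def)
  qed
qed

definition smoothT :: "'a::real_normed_vector set \<Rightarrow> ('a \<Rightarrow> real) \<Rightarrow> bool" where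
  "smoothT T h \<longleftrightarrow> open T \<and> (\<forall>vs. \<forall>p\<in>T. iterD vs h differentiable (at p))"

lemma smooth_onE:
  assumes "smooth_on S h" obtains T where "S \<subseteq> T" "smoothT T h"
  using assms unfolding smooth_on_def smoothT_def by blast

lemma iterD_append: "iterD vs (iterD [v] h) = iterD (vs @ [v]) h"
  by (induction vs) auto

lemma smoothT_iterD: "smoothT T h \<Longrightarrow> smoothT T (iterD [v] h)"
  unfolding smoothT_def by (simp only: iterD_append) blast

lemma iterD_zero: "iterD vs (\<lambda>_. 0::real) = (\<lambda>_. 0)"
proof (induction vs)
  case Nil thus ?case by simp
next
  case (Cons v vs)
  have "frechet_derivative (\<lambda>_. 0::real) (at p) = (\<lambda>_. 0)" for p :: 'a
    using frechet_derivative_at[OF has_derivative_const[of "0::real" "at p"]] by simp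
  thus ?case using Cons by simp
qed

lemma smoothT_zero: "open T \<Longrightarrow> smoothT T (\<lambda>_. 0)"
  unfolding smoothT_def by (simp add: iterD_zero)

lemma smoothT_hasd:
  "smoothT T h \<Longrightarrow> p \<in> T \<Longrightarrow> (h has_derivative frechet_derivative h (at p)) (at p)"
  unfolding smoothT_def using frechet_derivative_works by (metis iterD.simps(1))

lemma smoothT_cont: "smoothT T h \<Longrightarrow> continuous_on T h"
  unfolding smoothT_def
  by (metis continuous_at_imp_continuous_on differentiable_imp_continuous_within iterD.simps(1))

lemma smoothT_open: "smoothT T h \<Longrightarrow> open T" by (simp add: smoothT_def)

definition "e_t = ((1::real), ((0::real), (0::real)))"
definition "e_2 = ((0::real), ((1::real), (0::real)))"
definition "e_3 = ((0::real), ((0::real), (1::real)))"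

definition pdx :: "nat \<Rightarrow> (real \<times> real \<times> real \<Rightarrow> real) \<Rightarrow> real \<times> real \<times> real \<Rightarrow> real" where
  "pdx j H = (if j = 2 then iterD [e_2] H else if j = 3 then iterD [e_3] H else (\<lambda>_. 0))"

lemma smoothT_pdx: "smoothT T H \<Longrightarrow> smoothT T (pdx j H)"
proof -
  assume a: "smoothT T H"
  hence "open T" by (rule smoothT_open)
  hence z: "smoothT T (\<lambda>_. 0)" by (rule smoothT_zero)
  show ?thesis unfolding pdx_def using smoothT_iterD[OF a] z by (simp del: iterD.simps)
qed

lemma slice_deriv_lin:
  fixes H :: "real \<times> real \<times> real \<Rightarrow> real"
  assumes sm: "smoothT T H" and p: "p \<in> T"
  shows "((\<lambda>r. H (p + r *\<^sub>R v)) has_real_derivative frechet_derivative H (at p) v) (at 0)"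
proof -
  have hd: "(H has_derivative frechet_derivative H (at p)) (at p)" using smoothT_hasd[OF sm p] .
  have lin: "linear (frechet_derivative H (at p))" using hd has_derivative_linear by blast
  have g: "((\<lambda>r. p + r *\<^sub>R v) has_derivative (\<lambda>r. r *\<^sub>R v)) (at 0)"
    by (auto intro!: derivative_eq_intros)
  have "((\<lambda>r. H (p + r *\<^sub>R v)) has_derivative (\<lambda>r. frechet_derivative H (at p) (r *\<^sub>R v))) (at 0)"
    using has_derivative_compose[OF g, of H] hd by simp
  moreover have "(\<lambda>r. frechet_derivative H (at p) (r *\<^sub>R v)) = (*) (frechet_derivative H (at p) v)"
    using linear_cmul[OF lin] by (auto simp: mult.commute)
  ultimately show ?thesis by (simp add: has_field_derivative_def)
qed

lemma DERIV_shift0: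
  fixes f :: "real \<Rightarrow> real"
  assumes "((\<lambda>r. f (a + r)) has_real_derivative D) (at 0)"
  shows "(f has_real_derivative D) (at a)"
proof -
  have "((\<lambda>r. f (a + (r - a))) has_real_derivative D * 1) (at a)"
    by (rule DERIV_chain2[where f="\<lambda>r. f (a + r)"]) (use assms in \<open>auto intro!: derivative_eq_intros\<close>)
  thus ?thesis by simp
qed

lemma slice_deriv_2:
  assumes sm: "smoothT T H" and p: "(s,(a,b)) \<in> T"
  shows "((\<lambda>r. H (s,(r,b))) has_real_derivative pdx 2 H (s,(a,b))) (at a)"
proof -
  have "((\<lambda>r. H ((s,(a,b)) + r *\<^sub>R e_2)) has_real_derivative frechet_derivative H (at (s,(a,b))) e_2) (at 0)"
    by (rule slice_deriv_lin[OF sm p])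
  hence "((\<lambda>r. H (s,(a + r,b))) has_real_derivative pdx 2 H (s,(a,b))) (at 0)"
    by (simp add: e_2_def pdx_def)
  thus ?thesis by (rule DERIV_shift0[where f="\<lambda>r. H (s,(r,b))"])
qed

lemma slice_deriv_3:
  assumes sm: "smoothT T H" and p: "(s,(a,b)) \<in> T"
  shows "((\<lambda>r. H (s,(a,r))) has_real_derivative pdx 3 H (s,(a,b))) (at b)"
proof -
  have "((\<lambda>r. H ((s,(a,b)) + r *\<^sub>R e_3)) has_real_derivative frechet_derivative H (at (s,(a,b))) e_3) (at 0)"
    by (rule slice_deriv_lin[OF sm p])
  hence "((\<lambda>r. H (s,(a,b + r))) has_real_derivative pdx 3 H (s,(a,b))) (at 0)"
    by (simp add: e_3_def pdx_def)
  thus ?thesis by (rule DERIV_shift0[where f="\<lambda>r. H (s,(a,r))"])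
qed

lemma slice_deriv_t:
  assumes sm: "smoothT T H" and p: "(s,x) \<in> T"
  shows "((\<lambda>r. H (r,x)) has_real_derivative iterD [e_t] H (s,x)) (at s)"
proof -
  have "((\<lambda>r. H ((s,x) + r *\<^sub>R e_t)) has_real_derivative frechet_derivative H (at (s,x)) e_t) (at 0)"
    by (rule slice_deriv_lin[OF sm p])
  hence "((\<lambda>r. H (s + r,x)) has_real_derivative iterD [e_t] H (s,x)) (at 0)"
    by (simp add: e_t_def flip: zero_prod_def)
  thus ?thesis by (rule DERIV_shift0[where f="\<lambda>r. H (r,x)"])
qed

lemma fd_slice:
  fixes H :: "real \<times> real \<times> real \<Rightarrow> real"
  assumes sm: "smoothT T H" and p: "(s,x) \<in> T"
  shows "frechet_derivative (\<lambda>y. H (s,y)) (at x) = (\<lambda>v. frechet_derivative H (at (s,x)) (0,v))"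
proof -
  have hd: "(H has_derivative frechet_derivative H (at (s,x))) (at (s,x))" using smoothT_hasd[OF sm p] .
  have g: "((\<lambda>y. (s,y)) has_derivative (\<lambda>v. (0,v))) (at x)"
    by (auto intro!: derivative_eq_intros)
  have "((\<lambda>y. H (s,y)) has_derivative (\<lambda>v. frechet_derivative H (at (s,x)) (0,v))) (at x)"
    using has_derivative_compose[OF g, of H] hd by simp
  thus ?thesis by (rule frechet_derivative_at[symmetric])
qed

lemma sdx_slice:
  assumes sm: "smoothT T H" and p: "(s,x) \<in> T"
  shows "sdx j (\<lambda>y. H (s,y)) x = pdx j H (s,x)"
  using fd_slice[OF sm p] by (simp add: sdx_def pdx_def e_2_def e_3_def)

lemma slice_open: "open T \<Longrightarrow> open {y. (s,y) \<in> T}"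
proof -
  assume "open T"
  moreover have "continuous_on UNIV (\<lambda>y::'b::topological_space. (s::'a::topological_space,y))" by (intro continuous_intros)
  ultimately show ?thesis using open_vimage[of T "\<lambda>y. (s,y)"] by (simp add: vimage_def)
qed

lemma sdx_local:
  fixes f g :: "real \<times> real \<Rightarrow> real"
  assumes A: "open A" "x \<in> A" and eq: "\<And>y. y \<in> A \<Longrightarrow> f y = g y" and dg: "g differentiable (at x)"
  shows "sdx j f x = sdx j g x"
proof -
  have "(g has_derivative frechet_derivative g (at x)) (at x)" using dg frechet_derivative_works by blast
  hence "(f has_derivative frechet_derivative g (at x)) (at x)"
    by (rule has_derivative_transform_within_open[OF _ A]) (use eq in auto)
  hence "frechet_derivative f (at x) = frechet_derivative g (at x)" by (rule frechet_derivative_at[symmetric])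
  thus ?thesis by (simp add: sdx_def)
qed

lemma slice_differentiable:
  assumes sm: "smoothT T H" and p: "(s,x) \<in> T"
  shows "(\<lambda>y. H (s,y)) differentiable (at x)"
proof -
  have hd: "(H has_derivative frechet_derivative H (at (s,x))) (at (s,x))" using smoothT_hasd[OF sm p] .
  have g: "((\<lambda>y. (s,y)) has_derivative (\<lambda>v. (0,v))) (at x)"
    by (auto intro!: derivative_eq_intros)
  show ?thesis using has_derivative_compose[OF g, of H] hd unfolding differentiable_def by auto
qed

lemma sdx2_slice:
  assumes sm: "smoothT T H" and p: "(s,x) \<in> T"
  shows "sdx j (sdx k (\<lambda>y. H (s,y))) x = pdx j (pdx k H) (s,x)"
proof -
  have smk: "smoothT T (pdx k H)" by (rule smoothT_pdx[OF sm])
  have oT: "open T" using sm smoothT_open by blast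
  have "sdx j (sdx k (\<lambda>y. H (s,y))) x = sdx j (\<lambda>y. pdx k H (s,y)) x"
  proof (rule sdx_local[OF slice_open[OF oT]])
    show "x \<in> {y. (s, y) \<in> T}" using p by simp
    show "sdx k (\<lambda>y. H (s, y)) y = pdx k H (s, y)" if "y \<in> {y. (s, y) \<in> T}" for y
      using sdx_slice[OF sm] that by simp
    show "(\<lambda>y. pdx k H (s, y)) differentiable (at x)" by (rule slice_differentiable[OF smk p])
  qed
  also have "\<dots> = pdx j (pdx k H) (s,x)" by (rule sdx_slice[OF smk p])
  finally show ?thesis .
qed

lemma sint_cont:
  fixes f :: "'a::euclidean_space \<Rightarrow> real"
  assumes op: "open \<Omega>" and bd: "bounded \<Omega>" and cont: "continuous_on (closure \<Omega>) f"
  shows "set_integrable lborel \<Omega> f"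
proof -
  have cU: "compact (closure \<Omega>)" using bd by (simp add: compact_closure)
  have "set_integrable lborel (closure \<Omega>) f"
    unfolding set_integrable_def using borel_integrable_compact[OF cU cont] by simp
  thus ?thesis by (rule set_integrable_subset) (use op in \<open>auto simp: closure_subset\<close>)
qed

lemma slice_cont:
  fixes f :: "real \<times> 'a::topological_space \<Rightarrow> real"
  assumes "continuous_on (A \<times> K) f" "s \<in> A"
  shows "continuous_on K (\<lambda>x. f (s,x))"
  by (rule continuous_on_compose2[OF assms(1)]) (use assms(2) in \<open>auto intro!: continuous_intros\<close>)

lemma param_cont:
  fixes f :: "real \<times> (real \<times> real) \<Rightarrow> real"
  assumes op: "open \<Omega>" and bd: "bounded \<Omega>" and cont: "continuous_on ({a..b} \<times> closure \<Omega>) f"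
  shows "continuous_on {a..b} (\<lambda>s. LINT x:\<Omega>|lborel. f (s,x))"
  unfolding continuous_on_iff
proof (intro ballI allI impI)
  fix s0 and \<epsilon> :: real assume s0: "s0 \<in> {a..b}" and e: "0 < \<epsilon>"
  define m where "m = measure lborel \<Omega>"
  have m0: "m \<ge> 0" by (simp add: m_def)
  have fin: "emeasure lborel \<Omega> \<noteq> \<infinity>" using emeasure_bounded_finite[OF bd] by simp
  have cpt: "compact ({a..b} \<times> closure \<Omega>)" using bd by (simp add: compact_Times compact_closure)
  have uc: "uniformly_continuous_on ({a..b} \<times> closure \<Omega>) f"
    by (rule compact_uniformly_continuous[OF cont cpt])
  have e2: "\<epsilon> / (m + 1) > 0" using e m0 by simp
  obtain \<delta> where d: "\<delta> > 0" and dd: "\<And>p p'. p \<in> {a..b} \<times> closure \<Omega> \<Longrightarrow> p' \<in> {a..b} \<times> closure \<Omega> \<Longrightarrow>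
      dist p' p < \<delta> \<Longrightarrow> dist (f p') (f p) < \<epsilon> / (m + 1)"
    using uc e2 unfolding uniformly_continuous_on_def by metis
  show "\<exists>\<delta>>0. \<forall>s\<in>{a..b}. dist s s0 < \<delta> \<longrightarrow>
          dist (LINT x:\<Omega>|lborel. f (s,x)) (LINT x:\<Omega>|lborel. f (s0,x)) < \<epsilon>"
  proof (intro exI[of _ \<delta>] conjI ballI impI)
    show "\<delta> > 0" by (rule d)
    fix s assume s: "s \<in> {a..b}" and ds: "dist s s0 < \<delta>"
    have i1: "set_integrable lborel \<Omega> (\<lambda>x. f (s,x))"
      by (rule sint_cont[OF op bd slice_cont[OF cont s]])
    have i0: "set_integrable lborel \<Omega> (\<lambda>x. f (s0,x))"
      by (rule sint_cont[OF op bd slice_cont[OF cont s0]])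
    have idiff: "set_integrable lborel \<Omega> (\<lambda>x. f (s,x) - f (s0,x))"
      using i1 i0 by (rule set_integral_diff)
    have "dist (LINT x:\<Omega>|lborel. f (s,x)) (LINT x:\<Omega>|lborel. f (s0,x))
          = norm (LINT x:\<Omega>|lborel. f (s,x) - f (s0,x))"
      by (simp add: dist_real_def set_integral_diff(2)[OF i1 i0])
    also have "\<dots> \<le> (LINT x:\<Omega>|lborel. norm (f (s,x) - f (s0,x)))"
      by (rule set_integral_norm_bound[OF idiff])
    also have "\<dots> \<le> (LINT x:\<Omega>|lborel. \<epsilon> / (m + 1))"
    proof (rule set_integral_mono)
      show "set_integrable lborel \<Omega> (\<lambda>x. norm (f (s, x) - f (s0, x)))"
        using set_integrable_norm[OF idiff] by simp
      show "set_integrable lborel \<Omega> (\<lambda>x. \<epsilon> / (m + 1))"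
        using fin op by (auto simp: set_integrable_def integrable_indicator_iff less_top
           intro!: integrable_divide_zero integrable_mult_left)
      fix x assume x: "x \<in> \<Omega>"
      have "dist (f (s,x)) (f (s0,x)) < \<epsilon> / (m + 1)"
        by (rule dd) (use s s0 x ds closure_subset in \<open>auto simp: dist_Pair_Pair\<close>)
      thus "norm (f (s,x) - f (s0,x)) \<le> \<epsilon> / (m + 1)" by (simp add: dist_norm)
    qed
    also have "\<dots> = m * (\<epsilon> / (m + 1))"
      using fin op by (simp add: set_integral_const m_def)
    also have "\<dots> < \<epsilon>"
    proof -
      have "m * (\<epsilon> / (m + 1)) = \<epsilon> * (m / (m + 1))" by simp
      also have "\<dots> < \<epsilon> * 1" using m0 e by (intro mult_strict_left_mono) auto
      finally show ?thesis by simp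
    qed
    finally show "dist (LINT x:\<Omega>|lborel. f (s,x)) (LINT x:\<Omega>|lborel. f (s0,x)) < \<epsilon>" .
  qed
qed

lemma sint_cont2:
  fixes f :: "'a::euclidean_space \<Rightarrow> real"
  assumes K: "compact K" and cont: "continuous_on K f" and A: "A \<in> sets lborel" "A \<subseteq> K"
  shows "set_integrable lborel A f"
proof -
  have "set_integrable lborel K f"
    unfolding set_integrable_def using borel_integrable_compact[OF K cont] by simp
  thus ?thesis by (rule set_integrable_subset) (use A in auto)
qed

lemma energy_ftc:
  fixes F Ft :: "real \<times> (real \<times> real) \<Rightarrow> real"
  assumes op: "open \<Omega>" and bd: "bounded \<Omega>" and t0: "0 \<le> t"
   and contF: "continuous_on ({0..t} \<times> closure \<Omega>) F"
   and contFt: "continuous_on ({0..t} \<times> closure \<Omega>) Ft"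
   and der: "\<And>s x. s \<in> {0..t} \<Longrightarrow> x \<in> closure \<Omega> \<Longrightarrow> ((\<lambda>r. F (r,x)) has_real_derivative Ft (s,x)) (at s)"
  shows "(LINT x:\<Omega>|lborel. F (t,x)) - (LINT x:\<Omega>|lborel. F (0,x))
           = integral {0..t} (\<lambda>s. LINT x:\<Omega>|lborel. Ft (s,x))"
proof -
  let ?W = "\<lambda>s. LINT x:\<Omega>|lborel. Ft (s,x)"
  let ?G = "\<lambda>p::real \<times> (real \<times> real). indicator ({0..t} \<times> \<Omega>) p *\<^sub>R Ft p"
  have cpt: "compact ({0..t} \<times> closure \<Omega>)" using bd by (simp add: compact_Times compact_closure)
  have meas: "{0..t} \<times> \<Omega> \<in> sets lborel" using op borel_Times[of "{0..t}" \<Omega>] by auto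
  have sG: "set_integrable lborel ({0..t} \<times> \<Omega>) Ft"
    by (rule sint_cont2[OF cpt contFt meas]) (use closure_subset in auto)
  hence iG: "integrable (lborel \<Otimes>\<^sub>M lborel) ?G" by (simp add: set_integrable_def lborel_prod)
  have eqG: "(\<lambda>(s,x). ?G (s,x)) = ?G" by auto
  have iG2: "integrable (lborel \<Otimes>\<^sub>M lborel) (\<lambda>(s,x). ?G (s,x))" by (subst eqG) (rule iG)
  have ftc: "F (t,x) - F (0,x) = (LBINT s. indicator {0..t} s *\<^sub>R Ft (s,x))" if x: "x \<in> closure \<Omega>" for x
  proof -
    have "(LBINT s. indicator {0..t} s *\<^sub>R Ft (s,x)) = F (t,x) - F (0,x)"
    proof (rule integral_FTC_Icc[OF t0])
      fix s assume "0 \<le> s" "s \<le> t"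
      hence "((\<lambda>r. F (r,x)) has_real_derivative Ft (s,x)) (at s within {0..t})"
        using der[of s x] x by (auto intro: has_field_derivative_at_within)
      thus "((\<lambda>r. F (r,x)) has_vector_derivative Ft (s,x)) (at s within {0..t})"
        by (simp add: has_real_derivative_iff_has_vector_derivative)
    next
      show "continuous_on {0..t} (\<lambda>s. Ft (s,x))"
        by (rule continuous_on_compose2[OF contFt]) (use x in \<open>auto intro!: continuous_intros\<close>)
    qed
    thus ?thesis by simp
  qed
  have iF: "set_integrable lborel \<Omega> (\<lambda>x. F (s,x))" if "s \<in> {0..t}" for s
    by (rule sint_cont[OF op bd slice_cont[OF contF that]])
  have cW: "continuous_on {0..t} ?W" by (rule param_cont[OF op bd contFt])
  have iW: "set_integrable lborel {0..t} ?W"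
    by (rule sint_cont2[OF compact_Icc cW]) auto
  have "(LINT x:\<Omega>|lborel. F (t,x)) - (LINT x:\<Omega>|lborel. F (0,x))
        = (LINT x:\<Omega>|lborel. F (t,x) - F (0,x))"
    using set_integral_diff(2)[OF iF iF, of t 0] t0 by simp
  also have "\<dots> = (LINT x:\<Omega>|lborel. (LBINT s. indicator {0..t} s *\<^sub>R Ft (s,x)))"
    by (rule set_lebesgue_integral_cong) (use op ftc closure_subset in auto)
  also have "\<dots> = (LBINT x. LBINT s. ?G (s,x))"
    unfolding set_lebesgue_integral_def
    by (rule Bochner_Integration.integral_cong) (auto simp: indicator_times split: split_indicator)
  also have "\<dots> = (LBINT s. LBINT x. ?G (s,x))"
    using lborel_pair.Fubini_integral[of "\<lambda>s x. ?G (s,x)", OF iG2] by simp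
  also have "\<dots> = (LINT s:{0..t}|lborel. ?W s)"
    unfolding set_lebesgue_integral_def
    by (rule Bochner_Integration.integral_cong) (auto simp: indicator_times split: split_indicator)
  also have "\<dots> = integral {0..t} ?W"
    by (rule set_borel_integral_eq_integral[OF iW])
  finally show ?thesis .
qed

lemma sum3: "(\<Sum>i\<in>{1..3::nat}. f i) = f 1 + f 2 + f (3::nat)"
  by (simp add: eval_nat_numeral atLeastAtMostSuc_conv ac_simps)

lemma pointwise_energy:
  fixes q u dtu U Pg d :: "nat \<Rightarrow> real" and a c sU F :: "nat \<Rightarrow> nat \<Rightarrow> real" and Re p :: real
  assumes eq: "\<And>i. i \<in> {1..3} \<Longrightarrow> dtu i = 1 / Re * (c i 2 + c i 3)
          - (\<Sum>j\<in>{1..3}. u j * a i j) - (\<Sum>j\<in>{1..3}. U j * a i j)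
          - (\<Sum>j\<in>{1..3}. u j * sU i j) - Pg i + (\<Sum>j\<in>{1..3}. F i j * u j) + d i"
    and a1: "\<And>i. a i 1 = 0" and P1: "Pg 1 = 0"
    and div: "(\<Sum>j\<in>{1..3}. a j j) = 0" and q23: "q 2 = q 3"
  shows "(\<Sum>i\<in>{1..3}. q i * u i * dtu i) =
      ((\<Sum>i\<in>{1..3}. q i * (1/Re * ((a i 2)\<^sup>2 + u i * c i 2) - 1/2 * a 2 2 * (u i)\<^sup>2 - u 2 * u i * a i 2))
        - q 2 * (a 2 2 * p + u 2 * Pg 2))
    + ((\<Sum>i\<in>{1..3}. q i * (1/Re * ((a i 3)\<^sup>2 + u i * c i 3) - 1/2 * a 3 3 * (u i)\<^sup>2 - u 3 * u i * a i 3))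
        - q 2 * (a 3 3 * p + u 3 * Pg 3))
    + (\<Sum>i\<in>{1..3}. q i * (- 1/Re * ((a i 2)\<^sup>2 + (a i 3)\<^sup>2) - u i * (\<Sum>j\<in>{1..3}. U j * a i j)
        - u i * (\<Sum>j\<in>{1..3}. u j * sU i j) + u i * (\<Sum>j\<in>{1..3}. F i j * u j) + u i * d i))"
proof -
  have "a 1 1 + a 2 2 + a 3 3 = 0" using div unfolding sum3 .
  hence d3: "a 3 3 = - a 2 2" using a1[of 1] by linarith
  have m: "(1::nat) \<in> {1..3}" "(2::nat) \<in> {1..3}" "(3::nat) \<in> {1..3}" by auto
    show ?thesis
    unfolding sum3 eq[OF m(1), unfolded sum3] eq[OF m(2), unfolded sum3] eq[OF m(3), unfolded sum3]
      a1 P1 d3 q23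
    by (simp add: power2_eq_square field_simps) algebra
qed

lemma dom_open: "valid_geometry g \<Longrightarrow> open (dom g)"
  by (cases g) (auto simp: lipschitz_domain_def open_Times)

lemma dom_bounded: "valid_geometry g \<Longrightarrow> bounded (dom g)"
  by (cases g) (auto simp: lipschitz_domain_def bounded_Times)

lemma closure_dom_region: "valid_geometry g \<Longrightarrow> closure (dom g) \<subseteq> region g"
  by (cases g) (auto simp: closure_Times)

fun vanish2 :: "geometry \<Rightarrow> (real \<times> real \<Rightarrow> real) \<Rightarrow> bool" where
  "vanish2 (Bounded \<Omega>) f = (\<forall>x\<in>frontier \<Omega>. f x = 0)"
| "vanish2 (Periodic a b L) f = (\<forall>z. 0 < z \<and> z < L \<longrightarrow> f (a,z) = 0 \<and> f (b,z) = 0)"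

fun vanish3 :: "geometry \<Rightarrow> (real \<times> real \<Rightarrow> real) \<Rightarrow> bool" where
  "vanish3 (Bounded \<Omega>) f = (\<forall>x\<in>frontier \<Omega>. f x = 0)"
| "vanish3 (Periodic a b L) f = (\<forall>y. a < y \<and> y < b \<longrightarrow> f (y,L) = f (y,0))"

lemma div_geom2:
  fixes f f2 :: "real \<times> real \<Rightarrow> real"
  assumes g: "valid_geometry g"
   and der: "\<And>a b. (a,b) \<in> closure (dom g) \<Longrightarrow> ((\<lambda>r. f (r,b)) has_real_derivative f2 (a,b)) (at a)"
   and cont: "continuous_on (closure (dom g)) f2"
   and van: "vanish2 g f"
  shows "(LINT x:dom g|lborel. f2 x) = 0"
proof (cases g)
  case (Bounded \<Omega>)
  show ?thesis
    by (rule div2d_fst[where f=f]) (use g der cont van Bounded in \<open>auto simp: lipschitz_domain_def\<close>)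
next
  case (Periodic a b L)
  have "(LINT x:({a<..<b} \<times> {0<..<L})|lborel. f2 x) = 0"
    by (rule div_per_fst[where f=f]) (use g der cont van Periodic in \<open>auto simp: closure_Times\<close>)
  thus ?thesis using Periodic by simp
qed

lemma div_geom3:
  fixes f f3 :: "real \<times> real \<Rightarrow> real"
  assumes g: "valid_geometry g"
   and der: "\<And>a b. (a,b) \<in> closure (dom g) \<Longrightarrow> ((\<lambda>r. f (a,r)) has_real_derivative f3 (a,b)) (at b)"
   and cont: "continuous_on (closure (dom g)) f3"
   and van: "vanish3 g f"
  shows "(LINT x:dom g|lborel. f3 x) = 0"
proof (cases g)
  case (Bounded \<Omega>)
  show ?thesis
    by (rule div2d_snd[where f=f]) (use g der cont van Bounded in \<open>auto simp: lipschitz_domain_def\<close>)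
next
  case (Periodic a b L)
  have "(LINT x:({a<..<b} \<times> {0<..<L})|lborel. f3 x) = 0"
    by (rule div_per_snd[where f=f]) (use g der cont van Periodic in \<open>auto simp: closure_Times\<close>)
  thus ?thesis using Periodic by simp
qed

lemma fd_local:
  fixes f g :: "'a::real_normed_vector \<Rightarrow> real"
  assumes A: "open A" "x \<in> A" and eq: "\<And>y. y \<in> A \<Longrightarrow> f y = g y" and dg: "g differentiable (at x)"
  shows "frechet_derivative f (at x) = frechet_derivative g (at x)" "f differentiable (at x)"
proof -
  have "(g has_derivative frechet_derivative g (at x)) (at x)" using dg frechet_derivative_works by blast
  hence fd: "(f has_derivative frechet_derivative g (at x)) (at x)"
    by (rule has_derivative_transform_within_open[OF _ A]) (use eq in auto)
  thus "frechet_derivative f (at x) = frechet_derivative g (at x)" by (rule frechet_derivative_at[symmetric])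
  show "f differentiable (at x)" using fd unfolding differentiable_def by blast
qed

lemma smoothT_iterD_list: "smoothT T H \<Longrightarrow> smoothT T (iterD ws H)"
proof (induction ws)
  case Nil thus ?case by simp
next
  case (Cons w ws)
  have "smoothT T (iterD [w] (iterD ws H))" by (rule smoothT_iterD[OF Cons.IH[OF Cons.prems]])
  moreover have "iterD (w # ws) H = iterD [w] (iterD ws H)" by simp
  ultimately show ?case by (simp only:)
qed

lemma slice_iterD:
  fixes H :: "real \<times> real \<times> real \<Rightarrow> real"
  assumes sm: "smoothT T H" and y: "(s,y) \<in> T"
  shows "iterD vs (\<lambda>y. H (s,y)) y = iterD (map (\<lambda>v. (0,v)) vs) H (s,y)
       \<and> iterD vs (\<lambda>y. H (s,y)) differentiable (at y)"
  using y
proof (induction vs arbitrary: y)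
  case Nil
  thus ?case using slice_differentiable[OF sm Nil] by simp
next
  case (Cons v vs)
  let ?H' = "iterD (map (\<lambda>v. (0,v)) vs) H"
  have sm': "smoothT T ?H'" by (rule smoothT_iterD_list[OF sm])
  have oT: "open T" using sm smoothT_open by blast
  have A: "open {y. (s,y) \<in> T}" "y \<in> {y. (s,y) \<in> T}" using slice_open[OF oT] Cons.prems by auto
  have eq: "\<And>z. z \<in> {y. (s,y) \<in> T} \<Longrightarrow> iterD vs (\<lambda>y. H (s,y)) z = (\<lambda>z. ?H' (s,z)) z"
  proof -
    fix z assume "z \<in> {y. (s,y) \<in> T}"
    hence "(s,z) \<in> T" by simp
    from conjunct1[OF Cons.IH[OF this]] show "iterD vs (\<lambda>y. H (s,y)) z = (\<lambda>z. ?H' (s,z)) z" by (simp only:)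
  qed
  have dg: "(\<lambda>z. ?H' (s,z)) differentiable (at y)" by (rule slice_differentiable[OF sm' Cons.prems])
  note fl = fd_local[OF A eq dg]
  have "iterD (v # vs) (\<lambda>y. H (s,y)) y = frechet_derivative (\<lambda>z. ?H' (s,z)) (at y) v"
    using fl(1) by (simp only: iterD.simps)
  also have "\<dots> = frechet_derivative ?H' (at (s,y)) (0,v)" using fd_slice[OF sm' Cons.prems] by (simp only:)
  also have "\<dots> = iterD (map (\<lambda>v. (0,v)) (v # vs)) H (s,y)" by (simp only: list.map iterD.simps)
  finally have e1: "iterD (v # vs) (\<lambda>y. H (s,y)) y = iterD (map (\<lambda>v. (0,v)) (v # vs)) H (s,y)" .
  have "iterD (v # vs) (\<lambda>y. H (s,y)) differentiable (at y)"
  proof -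
    have smv: "smoothT T (iterD [(0,v)] ?H')" by (rule smoothT_iterD[OF sm'])
    have A2: "open {y. (s,y) \<in> T}" "y \<in> {y. (s,y) \<in> T}" using A .
    have eq2: "\<And>z. z \<in> {y. (s,y) \<in> T} \<Longrightarrow>
        iterD (v # vs) (\<lambda>y. H (s,y)) z = (\<lambda>z. iterD [(0,v)] ?H' (s,z)) z"
    proof -
      fix z assume z: "z \<in> {y. (s,y) \<in> T}"
      have Az: "open {y. (s,y) \<in> T}" "z \<in> {y. (s,y) \<in> T}" using A(1) z by auto
      have dgz: "(\<lambda>z. ?H' (s,z)) differentiable (at z)" using slice_differentiable[OF sm'] z by auto
      have "iterD (v # vs) (\<lambda>y. H (s,y)) z = frechet_derivative (\<lambda>z. ?H' (s,z)) (at z) v"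
        using fd_local(1)[OF Az eq dgz] by (simp only: iterD.simps)
      also have "\<dots> = frechet_derivative ?H' (at (s,z)) (0,v)" using fd_slice[OF sm'] z by (simp only: mem_Collect_eq)
      finally show "iterD (v # vs) (\<lambda>y. H (s,y)) z = (\<lambda>z. iterD [(0,v)] ?H' (s,z)) z" by (simp only: iterD.simps)
    qed
    have dg2: "(\<lambda>z. iterD [(0,v)] ?H' (s,z)) differentiable (at y)"
      by (rule slice_differentiable[OF smv Cons.prems])
    show ?thesis by (rule fd_local(2)[OF A2 eq2 dg2])
  qed
  with e1 show ?case by blast
qed

lemma slice_smooth:
  fixes H :: "real \<times> real \<times> real \<Rightarrow> real"
  assumes sm: "smoothT T H" and sub: "\<And>x. x \<in> R \<Longrightarrow> (s,x) \<in> T"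
  shows "smooth_on R (\<lambda>y. H (s,y))"
  unfolding smooth_on_def
proof (intro exI[of _ "{y. (s,y) \<in> T}"] conjI allI ballI)
  show "open {y. (s,y) \<in> T}" using sm smoothT_open slice_open by blast
  show "R \<subseteq> {y. (s,y) \<in> T}" using sub by auto
  fix vs p assume "p \<in> {y. (s,y) \<in> T}"
  thus "iterD vs (\<lambda>y. H (s,y)) differentiable (at p)" using slice_iterD[OF sm] by auto
qed

lemma smoothT_mono: "smoothT T H \<Longrightarrow> open T' \<Longrightarrow> T' \<subseteq> T \<Longrightarrow> smoothT T' H"
  unfolding smoothT_def by blast

lemma cont_slice:
  assumes sm: "smoothT T H" and sub: "\<And>x. x \<in> K \<Longrightarrow> (s,x) \<in> T"
  shows "continuous_on K (\<lambda>x. H (s,x))"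
  by (rule continuous_on_compose2[OF smoothT_cont[OF sm]]) (use sub in \<open>auto intro!: continuous_intros\<close>)

lemma per_deriv:
  fixes w w3 :: "real \<times> real \<Rightarrow> real"
  assumes per: "\<And>z. w (y, z + L) = w (y, z)"
   and d0: "((\<lambda>r. w (y,r)) has_real_derivative w3 (y,0)) (at 0)"
   and dL: "((\<lambda>r. w (y,r)) has_real_derivative w3 (y,L)) (at L)"
  shows "w3 (y,L) = w3 (y,0)"
proof -
  have "((\<lambda>r. w (y, r + L)) has_real_derivative w3 (y,L) * 1) (at 0)"
    by (rule DERIV_chain2[where f="\<lambda>r. w (y,r)"]) (use dL in \<open>auto intro!: derivative_eq_intros\<close>)
  hence "((\<lambda>r. w (y,r)) has_real_derivative w3 (y,L)) (at 0)" using per by simp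
  thus ?thesis using d0 DERIV_unique by blast
qed

lemma sint_sum3:
  fixes f :: "nat \<Rightarrow> 'a \<Rightarrow> real"
  assumes "\<And>i. i \<in> {1..3} \<Longrightarrow> set_integrable M A (f i)"
  shows "(LINT x:A|M. (\<Sum>i\<in>{1..3}. f i x)) = (\<Sum>i\<in>{1..3}. LINT x:A|M. f i x)"
proof -
  have i: "set_integrable M A (f 1)" "set_integrable M A (f 2)" "set_integrable M A (f 3)"
    using assms by auto
  show ?thesis unfolding sum3
    using set_integral_add(2)[OF set_integral_add(1)[OF i(1,2)] i(3)] set_integral_add(2)[OF i(1,2)]
    by simp
qed

lemma smooth_sdx_cont:
  assumes "smooth_on R w"
  shows "continuous_on R w" "continuous_on R (sdx j w)"
proof -
  obtain T where T: "R \<subseteq> T" "smoothT T w" using assms smooth_onE by blast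
  show "continuous_on R w" using smoothT_cont[OF T(2)] T(1) continuous_on_subset by blast
  have "continuous_on T (iterD [v] w)" for v using smoothT_cont[OF smoothT_iterD[OF T(2)]] .
  hence c: "continuous_on R (iterD [v] w)" for v using T(1) continuous_on_subset by blast
  show "continuous_on R (sdx j w)"
  proof (cases "j = 2 \<or> j = 3")
    case True
    thus ?thesis using c[of "(1,0)"] c[of "(0,1)"] unfolding sdx_def[abs_def] by auto
  next
    case False
    thus ?thesis unfolding sdx_def[abs_def] by auto
  qed
qed

lemma smooth_prod_cont:
  assumes "smooth_on ({0..} \<times> R) (\<lambda>(t,x). f t x)" "0 \<le> s" "K \<subseteq> R"
  shows "continuous_on K (f s)"
proof -
  obtain T where T: "{0..} \<times> R \<subseteq> T" "smoothT T (\<lambda>(t,x). f t x)" using assms(1) smooth_onE by blast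
  have "continuous_on K (\<lambda>x. (\<lambda>(t,x). f t x) (s,x))"
    by (rule cont_slice[OF T(2)]) (use T(1) assms(2,3) in auto)
  thus ?thesis by simp
qed

lemma master:
  fixes g Rey F U G Pt C q u p d s
  assumes geom: "valid_geometry g" and Re: "0 < Rey"
    and base: "base_flow g Rey F U G Pt" and poinc: "poincare_const g C"
    and qpos: "\<forall>i\<in>{1..3}. 0 < q i" and q23: "q 2 = q 3"
    and sol: "solution g Rey F U u p d" and s0: "0 \<le> s"
  shows "(LINT x:dom g|lborel. (\<Sum>i\<in>{1..3}. q i * u i s x * dt (u i) s x)) \<le>
     - (\<Sum>i\<in>{1..3}. LINT x:dom g|lborel. q i * C / Rey * (u i s x)\<^sup>2
          + q i * (\<Sum>j\<in>{1..3}. U j x * u i s x * dx j (u i) s x)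
          + q i * (\<Sum>j\<in>{1..3}. u j s x * u i s x * sdx j (U i) x)
          - q i * u i s x * (\<Sum>j\<in>{1..3}. F i j * u j s x)
          - q i * u i s x * d i s x)"
proof -
  define \<Omega> where "\<Omega> = dom g"
  define K where "K = closure \<Omega>"
  have op: "open \<Omega>" and bd: "bounded \<Omega>" using geom dom_open dom_bounded \<Omega>_def by auto
  have KR: "K \<subseteq> region g" using closure_dom_region[OF geom] K_def \<Omega>_def by auto
  have \<Omega>K: "\<Omega> \<subseteq> K" using K_def closure_subset by auto
  have \<Omega>R: "\<Omega> \<subseteq> region g" using \<Omega>K KR by auto
  define H where "H i = (\<lambda>(t,y). u i t y)" for i
  define Hp where "Hp = (\<lambda>(t,y). p t y)"
  note solD = sol[unfolded solution_def]
  have smu: "\<forall>i\<in>{1..3}. smooth_on ({0..} \<times> region g) (H i)" using solD by (simp add: H_def)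
  have smp: "smooth_on ({0..} \<times> region g) Hp" using solD by (simp add: Hp_def)
  have smd: "\<forall>i\<in>{1..3}. smooth_on ({0..} \<times> region g) (\<lambda>(t,x). d i t x)" using solD by simp
  have bcs: "\<forall>i\<in>{1..3}. bc g (u i s)" "periodic_field g (p s)" using solD s0 by auto
  have divs: "\<forall>x\<in>\<Omega>. (\<Sum>j\<in>{1..3}. dx j (u j) s x) = 0" using solD s0 \<Omega>_def by auto
  have eqs: "\<forall>i\<in>{1..3}. \<forall>x\<in>\<Omega>.
        dt (u i) s x =
          1 / Rey * lap (u i) s x
          - (\<Sum>j\<in>{1..3}. u j s x * dx j (u i) s x)
          - (\<Sum>j\<in>{1..3}. U j x * dx j (u i) s x)
          - (\<Sum>j\<in>{1..3}. u j s x * sdx j (U i) x)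
          - dx i p s x
          + (\<Sum>j\<in>{1..3}. F i j * u j s x)
          + d i s x" using solD s0 \<Omega>_def by auto
  have "\<forall>i\<in>{1..3}. \<exists>T. {0..} \<times> region g \<subseteq> T \<and> smoothT T (H i)" using smu smooth_onE by metis
  then obtain TT where TT: "\<And>i. i \<in> {1..3} \<Longrightarrow> {0..} \<times> region g \<subseteq> TT i \<and> smoothT (TT i) (H i)"
    by metis
  obtain Tp where Tp: "{0..} \<times> region g \<subseteq> Tp" "smoothT Tp Hp" using smp smooth_onE by blast
  have smH: "smoothT (TT i) (H i)" if "i \<in> {1..3}" for i using TT that by blast
  have inT: "(s,x) \<in> TT i" if "i \<in> {1..3}" "x \<in> region g" for i x using TT that s0 by blast
  have inTp: "(s,x) \<in> Tp" if "x \<in> region g" for x using Tp that s0 by blast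
  define a where "a i j x = pdx j (H i) (s,x)" for i j x
  define c where "c i j x = pdx j (pdx j (H i)) (s,x)" for i j x
  define P where "P j x = pdx j Hp (s,x)" for j x
  have uH: "u i s = (\<lambda>y. H i (s,y))" for i by (simp add: H_def)
  have pH: "p s = (\<lambda>y. Hp (s,y))" by (simp add: Hp_def)
  have F1: "dx j (u i) s x = a i j x" if "i \<in> {1..3}" "x \<in> region g" for i j x
    unfolding dx_def a_def uH using sdx_slice[OF smH inT] that by simp
  have F2: "lap (u i) s x = c i 2 x + c i 3 x" if "i \<in> {1..3}" "x \<in> region g" for i x
    unfolding lap_def slap_def c_def uH using sdx2_slice[OF smH inT] that by simp
  have F3: "dx j p s x = P j x" if "x \<in> region g" for j x
    unfolding dx_def P_def pH using sdx_slice[OF Tp(2) inTp] that by simp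
  have a1: "a i 1 x = 0" for i x by (simp add: a_def pdx_def)
  have P1: "P 1 x = 0" for x by (simp add: P_def pdx_def)

  have Du2: "((\<lambda>r. u i s (r,z)) has_real_derivative a i 2 (y,z)) (at y)"
    if "i \<in> {1..3}" "(y,z) \<in> region g" for i y z
    using slice_deriv_2[OF smH inT] that by (simp add: a_def H_def)
  have Du3: "((\<lambda>r. u i s (y,r)) has_real_derivative a i 3 (y,z)) (at z)"
    if "i \<in> {1..3}" "(y,z) \<in> region g" for i y z
    using slice_deriv_3[OF smH inT] that by (simp add: a_def H_def)
  have Da2: "((\<lambda>r. a i 2 (r,z)) has_real_derivative c i 2 (y,z)) (at y)"
    if "i \<in> {1..3}" "(y,z) \<in> region g" for i y z
    using slice_deriv_2[OF smoothT_pdx[OF smH] inT] that by (simp add: a_def c_def)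
  have Da3: "((\<lambda>r. a i 3 (y,r)) has_real_derivative c i 3 (y,z)) (at z)"
    if "i \<in> {1..3}" "(y,z) \<in> region g" for i y z
    using slice_deriv_3[OF smoothT_pdx[OF smH] inT] that by (simp add: a_def c_def)
  have Dp2: "((\<lambda>r. p s (r,z)) has_real_derivative P 2 (y,z)) (at y)" if "(y,z) \<in> region g" for y z
    using slice_deriv_2[OF Tp(2) inTp] that by (simp add: P_def Hp_def)
  have Dp3: "((\<lambda>r. p s (y,r)) has_real_derivative P 3 (y,z)) (at z)" if "(y,z) \<in> region g" for y z
    using slice_deriv_3[OF Tp(2) inTp] that by (simp add: P_def Hp_def)
  have cu: "continuous_on K (u i s)" if "i \<in> {1..3}" for i
    using cont_slice[OF smH[OF that], of K s] inT[OF that] KR by (auto simp: uH)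
  have ca: "continuous_on K (a i j)" if "i \<in> {1..3}" for i j
    using cont_slice[OF smoothT_pdx[OF smH[OF that]], of K s j] inT[OF that] KR
    unfolding a_def by blast
  have cc: "continuous_on K (c i j)" if "i \<in> {1..3}" for i j
    using cont_slice[OF smoothT_pdx[OF smoothT_pdx[OF smH[OF that]]], of K s j j] inT[OF that] KR
    unfolding c_def by blast
  have cP: "continuous_on K (P j)" for j
    using cont_slice[OF smoothT_pdx[OF Tp(2)], of K s j] inTp KR unfolding P_def by blast
  have cp: "continuous_on K (p s)"
    using cont_slice[OF Tp(2), of K s] inTp KR by (auto simp: pH)
  have cd: "continuous_on K (d i s)" if "i \<in> {1..3}" for i
    using smooth_prod_cont[of "region g" "d i" s K] smd that s0 KR by auto
  have cU: "continuous_on K (U j)" if "j \<in> {1..3}" for j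
    using smooth_sdx_cont(1)[of "region g" "U j"] base that KR continuous_on_subset
    unfolding base_flow_def by blast
  have csU: "continuous_on K (sdx j (U i))" if "i \<in> {1..3}" for i j
    using smooth_sdx_cont(2)[of "region g" "U i" j] base that KR continuous_on_subset
    unfolding base_flow_def by blast
  have dtH: "dt (u i) s x = iterD [e_t] (H i) (s,x)" for i x
    by (simp add: dt_def H_def e_t_def)
  have cdt: "continuous_on K (\<lambda>x. dt (u i) s x)" if "i \<in> {1..3}" for i
    unfolding dtH using cont_slice[OF smoothT_iterD[OF smH[OF that]], of K s] inT[OF that] KR by blast

  define g2f where "g2f x = (\<Sum>i\<in>{1..3}. q i * (1/Rey * ((a i 2 x)\<^sup>2 + u i s x * c i 2 x)
      - 1/2 * a 2 2 x * (u i s x)\<^sup>2 - u 2 s x * u i s x * a i 2 x)) - q 2 * (a 2 2 x * p s x + u 2 s x * P 2 x)" for x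
  define g3f where "g3f x = (\<Sum>i\<in>{1..3}. q i * (1/Rey * ((a i 3 x)\<^sup>2 + u i s x * c i 3 x)
      - 1/2 * a 3 3 x * (u i s x)\<^sup>2 - u 3 s x * u i s x * a i 3 x)) - q 2 * (a 3 3 x * p s x + u 3 s x * P 3 x)" for x
  define Ri where "Ri i x = q i * (- 1/Rey * ((a i 2 x)\<^sup>2 + (a i 3 x)\<^sup>2) - u i s x * (\<Sum>j\<in>{1..3}. U j x * a i j x)
        - u i s x * (\<Sum>j\<in>{1..3}. u j s x * sdx j (U i) x) + u i s x * (\<Sum>j\<in>{1..3}. F i j * u j s x) + u i s x * d i s x)" for i x
  have pw: "(\<Sum>i\<in>{1..3}. q i * u i s x * dt (u i) s x) = g2f x + g3f x + (\<Sum>i\<in>{1..3}. Ri i x)"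
    if x: "x \<in> \<Omega>" for x
  proof -
    have xR: "x \<in> region g" using x \<Omega>R by auto
    have eqx: "dt (u i) s x = 1 / Rey * (c i 2 x + c i 3 x)
          - (\<Sum>j\<in>{1..3}. u j s x * a i j x) - (\<Sum>j\<in>{1..3}. U j x * a i j x)
          - (\<Sum>j\<in>{1..3}. u j s x * sdx j (U i) x) - P i x + (\<Sum>j\<in>{1..3}. F i j * u j s x) + d i s x"
      if i: "i \<in> {1..3}" for i
      using eqs i x F1[OF i xR] F2[OF i xR] F3[OF xR] by simp
    have m: "(1::nat) \<in> {1..3}" "(2::nat) \<in> {1..3}" "(3::nat) \<in> {1..3}" by auto
    have dv: "(\<Sum>j\<in>{1..3}. a j j x) = 0"
    proof -
      have "dx 1 (u 1) s x + dx 2 (u 2) s x + dx 3 (u 3) s x = 0" using divs x unfolding sum3 by blast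
      thus ?thesis unfolding sum3 using F1[OF m(1) xR] F1[OF m(2) xR] F1[OF m(3) xR] by simp
    qed
    show ?thesis
      unfolding g2f_def g3f_def Ri_def
      by (rule pointwise_energy[where q=q and u="\<lambda>i. u i s x" and dtu="\<lambda>i. dt (u i) s x"
            and U="\<lambda>j. U j x" and Pg="\<lambda>j. P j x" and d="\<lambda>i. d i s x" and a="\<lambda>i j. a i j x"
            and c="\<lambda>i j. c i j x" and sU="\<lambda>i j. sdx j (U i) x" and F=F and Re=Rey and p="p s x",
            OF eqx a1 P1 dv q23])
  qed

  have m: "(1::nat) \<in> {1..3}" "(2::nat) \<in> {1..3}" "(3::nat) \<in> {1..3}" by auto
  define \<Phi>2 where "\<Phi>2 x = (\<Sum>i\<in>{1..3}. q i * (1/Rey * (u i s x * a i 2 x) - 1/2 * u 2 s x * (u i s x)\<^sup>2))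
        - q 2 * (u 2 s x * p s x)" for x
  define \<Phi>3 where "\<Phi>3 x = (\<Sum>i\<in>{1..3}. q i * (1/Rey * (u i s x * a i 3 x) - 1/2 * u 3 s x * (u i s x)\<^sup>2))
        - q 2 * (u 3 s x * p s x)" for x
  have cg2: "continuous_on K g2f" unfolding g2f_def
    by (intro continuous_intros cu ca cc cP cp m; simp)
  have cg3: "continuous_on K g3f" unfolding g3f_def
    by (intro continuous_intros cu ca cc cP cp m; simp)
  have int2: "(LINT x:\<Omega>|lborel. g2f x) = 0"
    unfolding \<Omega>_def
  proof (rule div_geom2[OF geom, where f=\<Phi>2])
    show "continuous_on (closure (dom g)) g2f" using cg2 K_def \<Omega>_def by simp
    fix y z assume yz: "(y,z) \<in> closure (dom g)"
    hence R: "(y,z) \<in> region g" using KR K_def \<Omega>_def by auto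
    note D = Du2[OF m(1) R] Du2[OF m(2) R] Du2[OF m(3) R] Da2[OF m(1) R] Da2[OF m(2) R] Da2[OF m(3) R] Dp2[OF R]
    show "((\<lambda>r. \<Phi>2 (r, z)) has_real_derivative g2f (y, z)) (at y)"
      unfolding \<Phi>2_def g2f_def sum3
      by (rule derivative_eq_intros D refl)+ (simp add: algebra_simps power2_eq_square)
  next
    show "vanish2 g \<Phi>2"
    proof (cases g)
      case (Bounded \<Omega>0)
      have "u i s x = 0" if "i \<in> {1..3}" "x \<in> frontier \<Omega>0" for i x using bcs(1) that Bounded by auto
      thus ?thesis using Bounded m by (auto simp: \<Phi>2_def sum3)
    next
      case (Periodic a0 b0 L)
      have "u i s (a0,z) = 0 \<and> u i s (b0,z) = 0" if "i \<in> {1..3}" for i z using bcs(1) that Periodic by auto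
      thus ?thesis using Periodic m by (auto simp: \<Phi>2_def sum3)
    qed
  qed
  have int3: "(LINT x:\<Omega>|lborel. g3f x) = 0"
    unfolding \<Omega>_def
  proof (rule div_geom3[OF geom, where f=\<Phi>3])
    show "continuous_on (closure (dom g)) g3f" using cg3 K_def \<Omega>_def by simp
    fix y z assume yz: "(y,z) \<in> closure (dom g)"
    hence R: "(y,z) \<in> region g" using KR K_def \<Omega>_def by auto
    note D = Du3[OF m(1) R] Du3[OF m(2) R] Du3[OF m(3) R] Da3[OF m(1) R] Da3[OF m(2) R] Da3[OF m(3) R] Dp3[OF R]
    show "((\<lambda>r. \<Phi>3 (y, r)) has_real_derivative g3f (y, z)) (at z)"
      unfolding \<Phi>3_def g3f_def sum3
      by (rule derivative_eq_intros D refl)+ (simp add: algebra_simps power2_eq_square)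
  next
    show "vanish3 g \<Phi>3"
    proof (cases g)
      case (Bounded \<Omega>0)
      have "u i s x = 0" if "i \<in> {1..3}" "x \<in> frontier \<Omega>0" for i x using bcs(1) that Bounded by auto
      thus ?thesis using Bounded m by (auto simp: \<Phi>3_def sum3)
    next
      case (Periodic a0 b0 L)
      have pu: "u i s (y,L) = u i s (y,0)" if "i \<in> {1..3}" for i y
        using bcs(1) that Periodic by (metis add_0 bc.simps(2))
      have pa: "a i 3 (y,L) = a i 3 (y,0)" if "i \<in> {1..3}" "a0 < y" "y < b0" for i y
      proof -
        have h1: "\<And>z. u i s (y, z + L) = u i s (y, z)" using bcs(1) that(1) Periodic by auto
        have h2: "((\<lambda>r. u i s (y, r)) has_real_derivative a i 3 (y, 0)) (at 0)"
          by (rule Du3[OF that(1)]) (use that Periodic in auto)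
        have h3: "((\<lambda>r. u i s (y, r)) has_real_derivative a i 3 (y, L)) (at L)"
          by (rule Du3[OF that(1)]) (use that Periodic in auto)
        show ?thesis using per_deriv[of "u i s" y L "a i 3", OF h1 h2 h3] .
      qed
      have pp: "p s (y,L) = p s (y,0)" for y using bcs(2) Periodic by (metis add_0 periodic_field.simps(2))
      show ?thesis using Periodic m pu pa pp by (auto simp: \<Phi>3_def sum3)
    qed
  qed

  define Q where "Q i x = q i * C / Rey * (u i s x)\<^sup>2
          + q i * (\<Sum>j\<in>{1..3}. U j x * u i s x * a i j x)
          + q i * (\<Sum>j\<in>{1..3}. u j s x * u i s x * sdx j (U i) x)
          - q i * u i s x * (\<Sum>j\<in>{1..3}. F i j * u j s x)
          - q i * u i s x * d i s x" for i x
  have cR: "continuous_on K (Ri i)" if i: "i \<in> {1..3}" for i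
    unfolding Ri_def[abs_def] by (intro continuous_intros cu ca csU cd cU i; simp)
  have cQ: "continuous_on K (Q i)" if i: "i \<in> {1..3}" for i
    unfolding Q_def[abs_def] by (intro continuous_intros cu ca csU cd cU i; simp)
  have iR: "set_integrable lborel \<Omega> (Ri i)" if "i \<in> {1..3}" for i
    using sint_cont[OF op bd] cR[OF that] K_def by simp
  have iQ: "set_integrable lborel \<Omega> (Q i)" if "i \<in> {1..3}" for i
    using sint_cont[OF op bd] cQ[OF that] K_def by simp
  have ig2: "set_integrable lborel \<Omega> g2f" using sint_cont[OF op bd] cg2 K_def by simp
  have ig3: "set_integrable lborel \<Omega> g3f" using sint_cont[OF op bd] cg3 K_def by simp
  have iRs: "set_integrable lborel \<Omega> (\<lambda>x. \<Sum>i\<in>{1..3}. Ri i x)"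
    unfolding sum3 using iR m by (intro set_integral_add) auto
  have Qeq: "(LINT x:\<Omega>|lborel. q i * C / Rey * (u i s x)\<^sup>2
          + q i * (\<Sum>j\<in>{1..3}. U j x * u i s x * dx j (u i) s x)
          + q i * (\<Sum>j\<in>{1..3}. u j s x * u i s x * sdx j (U i) x)
          - q i * u i s x * (\<Sum>j\<in>{1..3}. F i j * u j s x)
          - q i * u i s x * d i s x) = (LINT x:\<Omega>|lborel. Q i x)" if i: "i \<in> {1..3}" for i
    by (rule set_lebesgue_integral_cong) (use op \<Omega>R i F1 in \<open>auto simp: Q_def\<close>)
  have each: "(LINT x:\<Omega>|lborel. Ri i x) \<le> - (LINT x:\<Omega>|lborel. Q i x)" if i: "i \<in> {1..3}" for i
  proof -
    have qr: "q i / Rey > 0" using qpos i Re by auto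
    have smi: "smooth_on (region g) (u i s)"
      unfolding uH by (rule slice_smooth[OF smH[OF i]]) (use inT[OF i] in auto)
    have P: "(LINT x:\<Omega>|lborel. (sdx 2 (u i s) x)\<^sup>2 + (sdx 3 (u i s) x)\<^sup>2) \<ge> C * (LINT x:\<Omega>|lborel. (u i s x)\<^sup>2)"
      using poinc smi bcs(1) i unfolding poincare_const_def \<Omega>_def by blast
    have P2: "(LINT x:\<Omega>|lborel. (sdx 2 (u i s) x)\<^sup>2 + (sdx 3 (u i s) x)\<^sup>2)
        = (LINT x:\<Omega>|lborel. (a i 2 x)\<^sup>2 + (a i 3 x)\<^sup>2)"
      by (rule set_lebesgue_integral_cong) (use op \<Omega>R i F1 in \<open>auto simp: dx_def[symmetric]\<close>)
    have iu: "set_integrable lborel \<Omega> (\<lambda>x. (u i s x)\<^sup>2)"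
      using sint_cont[OF op bd] cu[OF i] K_def by (simp add: continuous_intros)
    have ia: "set_integrable lborel \<Omega> (\<lambda>x. (a i 2 x)\<^sup>2 + (a i 3 x)\<^sup>2)"
      using sint_cont[OF op bd] ca[OF i] K_def by (simp add: continuous_intros)
    have "(LINT x:\<Omega>|lborel. Ri i x) + (LINT x:\<Omega>|lborel. Q i x) = (LINT x:\<Omega>|lborel. Ri i x + Q i x)"
      using set_integral_add(2)[OF iR[OF i] iQ[OF i]] by simp
    also have "\<dots> = (LINT x:\<Omega>|lborel. q i / Rey * (C * (u i s x)\<^sup>2 - ((a i 2 x)\<^sup>2 + (a i 3 x)\<^sup>2)))"
      unfolding Ri_def Q_def sum3
      by (rule set_lebesgue_integral_cong) (use op Re in \<open>auto simp: field_simps power2_eq_square\<close>)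
    also have "\<dots> = q i / Rey * (C * (LINT x:\<Omega>|lborel. (u i s x)\<^sup>2) - (LINT x:\<Omega>|lborel. (a i 2 x)\<^sup>2 + (a i 3 x)\<^sup>2))"
      using set_integral_diff(2)[OF set_integrable_mult_right[OF iu, of C] ia]
      by (simp add: set_integral_mult_right)
    also have "\<dots> \<le> 0"
    proof -
      have X: "C * (LINT x:\<Omega>|lborel. (u i s x)\<^sup>2) - (LINT x:\<Omega>|lborel. (a i 2 x)\<^sup>2 + (a i 3 x)\<^sup>2) \<le> 0"
        using P P2 by linarith
      show ?thesis using mult_nonneg_nonpos[OF less_imp_le[OF qr] X] .
    qed
    finally show ?thesis by simp
  qed
  have "(LINT x:dom g|lborel. (\<Sum>i\<in>{1..3}. q i * u i s x * dt (u i) s x))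
        = (LINT x:\<Omega>|lborel. g2f x + g3f x + (\<Sum>i\<in>{1..3}. Ri i x))"
    unfolding \<Omega>_def[symmetric] by (rule set_lebesgue_integral_cong) (use op pw in auto)
  also have "\<dots> = (LINT x:\<Omega>|lborel. g2f x) + (LINT x:\<Omega>|lborel. g3f x) + (LINT x:\<Omega>|lborel. (\<Sum>i\<in>{1..3}. Ri i x))"
    using set_integral_add(2)[OF set_integral_add(1)[OF ig2 ig3] iRs] set_integral_add(2)[OF ig2 ig3] by simp
  also have "\<dots> = (\<Sum>i\<in>{1..3}. LINT x:\<Omega>|lborel. Ri i x)"
    using int2 int3 sint_sum3[of lborel \<Omega> Ri] iR by simp
  also have "\<dots> \<le> (\<Sum>i\<in>{1..3}. - (LINT x:\<Omega>|lborel. Q i x))"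
    by (rule sum_mono) (rule each)
  also have "\<dots> = - (\<Sum>i\<in>{1..3}. LINT x:dom g|lborel. q i * C / Rey * (u i s x)\<^sup>2
          + q i * (\<Sum>j\<in>{1..3}. U j x * u i s x * dx j (u i) s x)
          + q i * (\<Sum>j\<in>{1..3}. u j s x * u i s x * sdx j (U i) x)
          - q i * u i s x * (\<Sum>j\<in>{1..3}. F i j * u j s x)
          - q i * u i s x * d i s x)"
    unfolding \<Omega>_def[symmetric] using Qeq by (simp add: sum_negf)
  finally show ?thesis .
qed

lemma sol_regular:
  assumes geom: "valid_geometry g" and sol: "solution g Rey F U u p d" and i: "i \<in> {1..3}"
  shows "continuous_on ({0..} \<times> closure (dom g)) (\<lambda>(s,x). u i s x)"
    and "continuous_on ({0..} \<times> closure (dom g)) (\<lambda>(s,x). dt (u i) s x)"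
    and "\<And>s x. 0 \<le> s \<Longrightarrow> x \<in> closure (dom g) \<Longrightarrow> ((\<lambda>r. u i r x) has_real_derivative dt (u i) s x) (at s)"
    and "continuous_on ({0..} \<times> closure (dom g)) (\<lambda>(s,x). d i s x)"
    and "\<And>s j. 0 \<le> s \<Longrightarrow> continuous_on (closure (dom g)) (dx j (u i) s)"
proof -
  have KR: "closure (dom g) \<subseteq> region g" by (rule closure_dom_region[OF geom])
  have sub: "{0..} \<times> closure (dom g) \<subseteq> {0..} \<times> region g" using KR by auto
  obtain T where T: "{0..} \<times> region g \<subseteq> T" "smoothT T (\<lambda>(s,x). u i s x)"
    using sol i unfolding solution_def by (meson smooth_onE)
  obtain Td where Td: "{0..} \<times> region g \<subseteq> Td" "smoothT Td (\<lambda>(s,x). d i s x)"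
    using sol i unfolding solution_def by (meson smooth_onE)
  show "continuous_on ({0..} \<times> closure (dom g)) (\<lambda>(s,x). u i s x)"
    using smoothT_cont[OF T(2)] T(1) sub continuous_on_subset by blast
  show "continuous_on ({0..} \<times> closure (dom g)) (\<lambda>(s,x). d i s x)"
    using smoothT_cont[OF Td(2)] Td(1) sub continuous_on_subset by blast
  have dtH: "(\<lambda>(s,x). dt (u i) s x) = iterD [e_t] (\<lambda>(s,x). u i s x)"
    by (auto simp: dt_def e_t_def fun_eq_iff)
  show "continuous_on ({0..} \<times> closure (dom g)) (\<lambda>(s,x). dt (u i) s x)"
    unfolding dtH using smoothT_cont[OF smoothT_iterD[OF T(2)]] T(1) sub continuous_on_subset by blast
  show "((\<lambda>r. u i r x) has_real_derivative dt (u i) s x) (at s)" if "0 \<le> s" "x \<in> closure (dom g)" for s x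
  proof -
    have "(s,x) \<in> T" using T(1) that KR by auto
    from slice_deriv_t[OF T(2) this] show ?thesis by (simp add: dt_def e_t_def)
  qed
  show "continuous_on (closure (dom g)) (dx j (u i) s)" if s: "0 \<le> s" for s j
  proof -
    have inT: "(s,x) \<in> T" if "x \<in> region g" for x using T(1) that s by auto
    have c: "continuous_on (closure (dom g)) (\<lambda>x. pdx j (\<lambda>(s,x). u i s x) (s,x))"
      by (rule cont_slice[OF smoothT_pdx[OF T(2)]]) (use inT KR in auto)
    have e: "dx j (u i) s x = pdx j (\<lambda>(s,x). u i s x) (s,x)" if "x \<in> closure (dom g)" for x
    proof -
      have "u i s = (\<lambda>y. (\<lambda>(s,x). u i s x) (s,y))" by simp
      hence "dx j (u i) s x = sdx j (\<lambda>y. (\<lambda>(s,x). u i s x) (s,y)) x" by (simp add: dx_def)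
      also have "\<dots> = pdx j (\<lambda>(s,x). u i s x) (s,x)" by (rule sdx_slice[OF T(2) inT]) (use that KR in auto)
      finally show ?thesis .
    qed
    show ?thesis using continuous_on_cong[OF refl e] c by (metis (no_types, lifting) continuous_on_eq e)
  qed
qed

lemma base_cont:
  assumes geom: "valid_geometry g" and base: "base_flow g Rey F U G Pt" and i: "i \<in> {1..3}"
  shows "continuous_on (closure (dom g)) (U i)" "continuous_on (closure (dom g)) (sdx j (U i))"
proof -
  have KR: "closure (dom g) \<subseteq> region g" by (rule closure_dom_region[OF geom])
  have sm: "smooth_on (region g) (U i)" using base i unfolding base_flow_def by blast
  show "continuous_on (closure (dom g)) (U i)" using smooth_sdx_cont(1)[OF sm] KR continuous_on_subset by blast
  show "continuous_on (closure (dom g)) (sdx j (U i))" using smooth_sdx_cont(2)[OF sm] KR continuous_on_subset by blast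
qed

lemma energy_sol:
  assumes geom: "valid_geometry g" and sol: "solution g Rey F U u p d" and t0: "0 \<le> t"
  shows "(LINT x:dom g|lborel. (\<Sum>i\<in>{1..3}. q i * (u i t x)\<^sup>2)) - (LINT x:dom g|lborel. (\<Sum>i\<in>{1..3}. q i * (u i 0 x)\<^sup>2))
       = integral {0..t} (\<lambda>s. LINT x:dom g|lborel. (\<Sum>i\<in>{1..3}. 2 * q i * u i s x * dt (u i) s x))"
    and "continuous_on {0..t} (\<lambda>s. LINT x:dom g|lborel. (\<Sum>i\<in>{1..3}. 2 * q i * u i s x * dt (u i) s x))"
proof -
  have op: "open (dom g)" and bd: "bounded (dom g)" using geom dom_open dom_bounded by auto
  have S: "{0..t} \<times> closure (dom g) \<subseteq> {0..} \<times> closure (dom g)" by auto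
  have cu: "continuous_on ({0..t} \<times> closure (dom g)) (\<lambda>p. u i (fst p) (snd p))" if "i \<in> {1..3}" for i
    using continuous_on_subset[OF sol_regular(1)[OF geom sol that] S] by (simp add: case_prod_beta)
  have cdt: "continuous_on ({0..t} \<times> closure (dom g)) (\<lambda>p. dt (u i) (fst p) (snd p))" if "i \<in> {1..3}" for i
    using continuous_on_subset[OF sol_regular(2)[OF geom sol that] S] by (simp add: case_prod_beta)
  let ?F = "\<lambda>p. \<Sum>i\<in>{1..3}. q i * (u i (fst p) (snd p))\<^sup>2"
  let ?Ft = "\<lambda>p. \<Sum>i\<in>{1..3}. 2 * q i * u i (fst p) (snd p) * dt (u i) (fst p) (snd p)"
  have cF: "continuous_on ({0..t} \<times> closure (dom g)) ?F"
    by (intro continuous_intros cu; simp)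
  have cFt: "continuous_on ({0..t} \<times> closure (dom g)) ?Ft"
    by (intro continuous_intros cu cdt; simp)
  have m: "(1::nat) \<in> {1..3}" "(2::nat) \<in> {1..3}" "(3::nat) \<in> {1..3}" by auto
  have der: "((\<lambda>r. ?F (r,x)) has_real_derivative ?Ft (s,x)) (at s)"
    if "s \<in> {0..t}" "x \<in> closure (dom g)" for s x
  proof -
    note D = sol_regular(3)[OF geom sol m(1)] sol_regular(3)[OF geom sol m(2)] sol_regular(3)[OF geom sol m(3)]
    have s0: "0 \<le> s" using that by auto
    note D' = D(1)[OF s0 that(2)] D(2)[OF s0 that(2)] D(3)[OF s0 that(2)]
    show ?thesis unfolding sum3 fst_conv snd_conv
      by (rule derivative_eq_intros D' refl)+ (simp add: algebra_simps)
  qed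
  have "(LINT x:dom g|lborel. ?F (t,x)) - (LINT x:dom g|lborel. ?F (0,x))
        = integral {0..t} (\<lambda>s. LINT x:dom g|lborel. ?Ft (s,x))"
    by (rule energy_ftc[OF op bd t0 cF cFt der])
  thus "(LINT x:dom g|lborel. (\<Sum>i\<in>{1..3}. q i * (u i t x)\<^sup>2)) - (LINT x:dom g|lborel. (\<Sum>i\<in>{1..3}. q i * (u i 0 x)\<^sup>2))
       = integral {0..t} (\<lambda>s. LINT x:dom g|lborel. (\<Sum>i\<in>{1..3}. 2 * q i * u i s x * dt (u i) s x))" by simp
  have "continuous_on {0..t} (\<lambda>s. LINT x:dom g|lborel. ?Ft (s,x))"
    by (rule param_cont[OF op bd cFt])
  thus "continuous_on {0..t} (\<lambda>s. LINT x:dom g|lborel. (\<Sum>i\<in>{1..3}. 2 * q i * u i s x * dt (u i) s x))" by simp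
qed

lemma set_int_nonneg:
  fixes f :: "'a \<Rightarrow> real"
  assumes "\<And>x. x \<in> A \<Longrightarrow> 0 \<le> f x"
  shows "0 \<le> (LINT x:A|M. f x)"
  unfolding set_lebesgue_integral_def
  by (rule integral_nonneg_AE) (use assms in \<open>auto split: split_indicator\<close>)

lemma inclos: "x \<in> \<Omega> \<Longrightarrow> x \<in> closure \<Omega>" using closure_subset by blast

lemma nn_set_int:
  fixes f :: "'a::euclidean_space \<Rightarrow> real"
  assumes int: "set_integrable lborel A f" and nn: "\<And>x. x \<in> A \<Longrightarrow> 0 \<le> f x"
  shows "(\<integral>\<^sup>+ x\<in>A. ennreal (f x) \<partial>lborel) = ennreal (LINT x:A|lborel. f x)"
proof -
  have "(\<integral>\<^sup>+ x\<in>A. ennreal (f x) \<partial>lborel) = (\<integral>\<^sup>+ x. ennreal (indicator A x *\<^sub>R f x) \<partial>lborel)"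
    by (rule nn_integral_cong) (auto split: split_indicator)
  also have "\<dots> = ennreal (LBINT x. indicator A x *\<^sub>R f x)"
    by (rule nn_integral_eq_integral) (use int nn in \<open>auto simp: set_integrable_def split: split_indicator\<close>)
  finally show ?thesis by (simp add: set_lebesgue_integral_def)
qed

lemma nn_conv:
  fixes f :: "real \<times> (real \<times> real) \<Rightarrow> real"
  assumes op: "open \<Omega>" and bd: "bounded \<Omega>" and T0: "0 \<le> T"
    and cont: "continuous_on ({0..T} \<times> closure \<Omega>) f"
    and nn: "\<And>t x. t \<in> {0..T} \<Longrightarrow> x \<in> closure \<Omega> \<Longrightarrow> 0 \<le> f (t,x)"
  shows "(\<integral>\<^sup>+ t\<in>{0..T}. (\<integral>\<^sup>+ x\<in>\<Omega>. ennreal (f (t,x)) \<partial>lborel) \<partial>lborel)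
       = ennreal (integral {0..T} (\<lambda>s. LINT x:\<Omega>|lborel. f (s,x)))"
proof -
  let ?m = "\<lambda>s. LINT x:\<Omega>|lborel. f (s,x)"
  have nnO: "0 \<le> f (t,x)" if "t \<in> {0..T}" "x \<in> \<Omega>" for t x using nn that inclos by blast
  have cm: "continuous_on {0..T} ?m" by (rule param_cont[OF op bd cont])
  have mnn: "0 \<le> ?m s" if "s \<in> {0..T}" for s
    by (rule set_int_nonneg) (use nnO that in blast)
  have inner: "(\<integral>\<^sup>+ x\<in>\<Omega>. ennreal (f (t,x)) \<partial>lborel) = ennreal (?m t)" if "t \<in> {0..T}" for t
    by (rule nn_set_int[OF sint_cont[OF op bd slice_cont[OF cont that]]]) (use nnO that in blast)
  have "(\<integral>\<^sup>+ t\<in>{0..T}. (\<integral>\<^sup>+ x\<in>\<Omega>. ennreal (f (t,x)) \<partial>lborel) \<partial>lborel)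
      = (\<integral>\<^sup>+ t\<in>{0..T}. ennreal (?m t) \<partial>lborel)"
    by (rule nn_integral_cong) (use inner in \<open>auto split: split_indicator\<close>)
  also have "\<dots> = ennreal (LINT t:{0..T}|lborel. ?m t)"
    by (rule nn_set_int[OF sint_cont2[OF compact_Icc cm]]) (use mnn in auto)
  also have "\<dots> = ennreal (integral {0..T} ?m)"
    using set_borel_integral_eq_integral(2)[OF sint_cont2[OF compact_Icc cm]] by simp
  finally show ?thesis .
qed

lemma L2st_bound:
  fixes f :: "real \<times> (real \<times> real) \<Rightarrow> real" and X :: ennreal
  assumes op: "open \<Omega>" and bd: "bounded \<Omega>"
    and cont: "\<And>T. 0 \<le> T \<Longrightarrow> continuous_on ({0..T} \<times> closure \<Omega>) f"
    and nn: "\<And>t x. 0 \<le> t \<Longrightarrow> x \<in> closure \<Omega> \<Longrightarrow> 0 \<le> f (t,x)"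
    and bnd: "\<And>T. 0 \<le> T \<Longrightarrow> ennreal (integral {0..T} (\<lambda>s. LINT x:\<Omega>|lborel. f (s,x))) \<le> X"
  shows "(\<integral>\<^sup>+ t\<in>{0..}. (\<integral>\<^sup>+ x\<in>\<Omega>. ennreal (f (t,x)) \<partial>lborel) \<partial>lborel) \<le> X"
proof -
  let ?h = "\<lambda>t. (\<integral>\<^sup>+ x\<in>\<Omega>. ennreal (f (t,x)) \<partial>lborel)"
  let ?m = "\<lambda>s. LINT x:\<Omega>|lborel. f (s,x)"
  have nnO: "0 \<le> f (t,x)" if "0 \<le> t" "x \<in> \<Omega>" for t x using nn that inclos by blast
  define G where "G n t = ennreal (indicator {0..real n} t *\<^sub>R ?m t)" for n :: nat and t
  have Gh: "G n t = ?h t * indicator {0..real n} t" for n t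
  proof (cases "t \<in> {0..real n}")
    case True
    have "?h t = ennreal (?m t)"
      by (rule nn_set_int[OF sint_cont[OF op bd slice_cont[OF cont[of "real n"] True]]])
         (use nnO True in auto)
    thus ?thesis using True by (simp add: G_def)
  next
    case False thus ?thesis by (simp add: G_def)
  qed
  have mG: "G n \<in> borel_measurable lborel" for n
  proof -
    have "continuous_on {0..real n} ?m" by (rule param_cont[OF op bd cont]) simp
    hence "(\<lambda>t. indicator {0..real n} t *\<^sub>R ?m t) \<in> borel_measurable borel"
      by (intro borel_measurable_continuous_on_indicator) auto
    thus ?thesis unfolding G_def by simp
  qed
  have inc: "incseq G"
    unfolding incseq_def le_fun_def Gh
    by (auto intro!: mult_left_mono split: split_indicator)
  have sup: "(SUP n. G n t) = ?h t * indicator {0..} t" for t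
  proof (cases "0 \<le> t")
    case True
    obtain N :: nat where N: "t \<le> real N" using real_arch_simple by blast
    have "(SUP n. G n t) = G N t"
    proof (rule antisym)
      show "G N t \<le> (SUP n. G n t)" by (rule SUP_upper) simp
      show "(SUP n. G n t) \<le> G N t"
      proof (rule SUP_least)
        fix n show "G n t \<le> G N t" unfolding Gh using True N
          by (auto split: split_indicator)
      qed
    qed
    thus ?thesis unfolding Gh using True N by (simp add: indicator_def)
  next
    case False thus ?thesis unfolding Gh by (simp add: indicator_def)
  qed
  have "(\<integral>\<^sup>+ t\<in>{0..}. ?h t \<partial>lborel) = (\<integral>\<^sup>+ t. (SUP n. G n t) \<partial>lborel)"
    by (simp add: sup)
  also have "\<dots> = (SUP n. integral\<^sup>N lborel (G n))"
    by (rule nn_integral_monotone_convergence_SUP[OF inc mG])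
  also have "\<dots> \<le> X"
  proof (rule SUP_least)
    fix n
    have "integral\<^sup>N lborel (G n) = (\<integral>\<^sup>+ t\<in>{0..real n}. ?h t \<partial>lborel)" unfolding Gh by simp
    also have "\<dots> = ennreal (integral {0..real n} ?m)"
      by (rule nn_conv[OF op bd _ cont]) (use nn in auto)
    also have "\<dots> \<le> X" by (rule bnd) simp
    finally show "integral\<^sup>N lborel (G n) \<le> X" .
  qed
  finally show ?thesis .
qed

lemma sol_slices:
  assumes geom: "valid_geometry g" and sol: "solution g Rey F U u p d" and s0: "0 \<le> s" and i: "i \<in> {1..3}"
  shows "continuous_on (closure (dom g)) (u i s)" "continuous_on (closure (dom g)) (d i s)"
proof -
  show "continuous_on (closure (dom g)) (u i s)"
    using slice_cont[OF sol_regular(1)[OF geom sol i], of s] s0 by simp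
  show "continuous_on (closure (dom g)) (d i s)"
    using slice_cont[OF sol_regular(4)[OF geom sol i], of s] s0 by simp
qed

lemma W_eq:
  "(LINT x:A|lborel. (\<Sum>i\<in>{1..3}. 2 * q i * u i s x * dt (u i) s x))
   = 2 * (LINT x:A|lborel. (\<Sum>i\<in>{1..3}. q i * u i s x * dt (u i) s x))"
proof -
  have "(\<lambda>x. (\<Sum>i\<in>{1..3}. 2 * q i * u i s x * dt (u i) s x)) = (\<lambda>x. 2 * (\<Sum>i\<in>{1..3}. q i * u i s x * dt (u i) s x))"
    by (simp add: sum_distrib_left mult.assoc)
  thus ?thesis by (simp add: set_integral_mult_right)
qed

lemma part1:
  fixes g Rey F U G Pt C q
  assumes geom: "valid_geometry g" and Re: "0 < Rey"
    and base: "base_flow g Rey F U G Pt" and poinc: "poincare_const g C"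
    and qpos: "\<forall>i\<in>{1..3}. 0 < q i" and q23: "q 2 = q 3"
    and hyp: "\<forall>u p d. solution g Rey F U u p d \<and> (\<forall>i\<in>{1..3}. \<forall>t\<ge>0. \<forall>x\<in>dom g. d i t x = 0) \<longrightarrow>
        (\<forall>t\<ge>0. 0 \<le> (\<Sum>i\<in>{1..3}. LINT x:dom g|lborel.
            (q i * C / Rey - 1) * (u i t x)\<^sup>2
            + q i * (\<Sum>j\<in>{1..3}. U j x * u i t x * dx j (u i) t x)
            + q i * (\<Sum>j\<in>{1..3}. u j t x * u i t x * sdx j (U i) x)
            - q i * u i t x * (\<Sum>j\<in>{1..3}. F i j * u j t x)))"
  shows "\<forall>u p d. solution g Rey F U u p d \<and> (\<forall>i\<in>{1..3}. \<forall>t\<ge>0. \<forall>x\<in>dom g. d i t x = 0) \<longrightarrow>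
           L2st_sq_vec (dom g) u \<le> ennreal (Max (q ` {1..3})) * ennreal (L2_sq (dom g) (\<lambda>i. u i 0))"
proof (intro allI impI, elim conjE)
  fix u p d
  assume sol: "solution g Rey F U u p d" and d0: "\<forall>i\<in>{1..3}. \<forall>t\<ge>0. \<forall>x\<in>dom g. d i t x = 0"
  define \<Omega> where "\<Omega> = dom g"
  have op: "open \<Omega>" and bd: "bounded \<Omega>" using geom dom_open dom_bounded \<Omega>_def by auto
  define m where "m s = (LINT x:\<Omega>|lborel. (\<Sum>i\<in>{1..3}. (u i s x)\<^sup>2))" for s
  define V where "V s = (LINT x:\<Omega>|lborel. (\<Sum>i\<in>{1..3}. q i * (u i s x)\<^sup>2))" for s
  define W where "W s = (LINT x:\<Omega>|lborel. (\<Sum>i\<in>{1..3}. 2 * q i * u i s x * dt (u i) s x))" for s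
  have m3: "(1::nat) \<in> {1..3}" "(2::nat) \<in> {1..3}" "(3::nat) \<in> {1..3}" by auto
  have WI: "W s \<le> - 2 * m s" if s0: "0 \<le> s" for s
  proof -
    note cu = sol_slices(1)[OF geom sol s0] and cd = sol_slices(2)[OF geom sol s0]
    note cdx = sol_regular(5)[OF geom sol _ s0]
    note cU = base_cont(1)[OF geom base] and csU = base_cont(2)[OF geom base]
    define Hy where "Hy i x = (q i * C / Rey - 1) * (u i s x)\<^sup>2
            + q i * (\<Sum>j\<in>{1..3}. U j x * u i s x * dx j (u i) s x)
            + q i * (\<Sum>j\<in>{1..3}. u j s x * u i s x * sdx j (U i) x)
            - q i * u i s x * (\<Sum>j\<in>{1..3}. F i j * u j s x)" for i x
    define Q where "Q i x = q i * C / Rey * (u i s x)\<^sup>2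
          + q i * (\<Sum>j\<in>{1..3}. U j x * u i s x * dx j (u i) s x)
          + q i * (\<Sum>j\<in>{1..3}. u j s x * u i s x * sdx j (U i) x)
          - q i * u i s x * (\<Sum>j\<in>{1..3}. F i j * u j s x)
          - q i * u i s x * d i s x" for i x
    have iHy: "set_integrable lborel \<Omega> (Hy i)" if i: "i \<in> {1..3}" for i
      unfolding Hy_def[abs_def] \<Omega>_def
      by (intro sint_cont dom_open dom_bounded geom continuous_intros cu cd cdx cU csU i; simp)
    have iu: "set_integrable lborel \<Omega> (\<lambda>x. (u i s x)\<^sup>2)" if i: "i \<in> {1..3}" for i
      unfolding \<Omega>_def by (intro sint_cont dom_open dom_bounded geom continuous_intros cu i)
    have QH: "(LINT x:\<Omega>|lborel. Q i x) = (LINT x:\<Omega>|lborel. Hy i x) + (LINT x:\<Omega>|lborel. (u i s x)\<^sup>2)"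
      if i: "i \<in> {1..3}" for i
    proof -
      have "(LINT x:\<Omega>|lborel. Q i x) = (LINT x:\<Omega>|lborel. Hy i x + (u i s x)\<^sup>2)"
        by (rule set_lebesgue_integral_cong) (use op d0 s0 i in \<open>auto simp: Q_def Hy_def \<Omega>_def algebra_simps\<close>)
      thus ?thesis using set_integral_add(2)[OF iHy[OF i] iu[OF i]] by simp
    qed
    have H: "0 \<le> (\<Sum>i\<in>{1..3}. LINT x:\<Omega>|lborel. Hy i x)"
      using hyp sol d0 s0 unfolding Hy_def \<Omega>_def by blast
    have M: "(LINT x:\<Omega>|lborel. (\<Sum>i\<in>{1..3}. q i * u i s x * dt (u i) s x)) \<le> - (\<Sum>i\<in>{1..3}. LINT x:\<Omega>|lborel. Q i x)"
      using master[OF geom Re base poinc qpos q23 sol s0] unfolding Q_def \<Omega>_def .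
    have "(\<Sum>i\<in>{1..3}. LINT x:\<Omega>|lborel. Q i x) = (\<Sum>i\<in>{1..3}. LINT x:\<Omega>|lborel. Hy i x) + m s"
      using QH sint_sum3[of lborel \<Omega> "\<lambda>i x. (u i s x)\<^sup>2"] iu by (simp add: sum.distrib m_def)
    hence "(LINT x:\<Omega>|lborel. (\<Sum>i\<in>{1..3}. q i * u i s x * dt (u i) s x)) \<le> - m s" using M H by linarith
    thus ?thesis unfolding W_def W_eq by simp
  qed
  have cu2: "continuous_on ({0..T} \<times> closure (dom g)) (\<lambda>p. \<Sum>i\<in>{1..3}. (u i (fst p) (snd p))\<^sup>2)" for T
  proof -
    have sub: "{0..T} \<times> closure (dom g) \<subseteq> {0..} \<times> closure (dom g)" by auto
    have "continuous_on ({0..T} \<times> closure (dom g)) (\<lambda>p. u i (fst p) (snd p))" if "i \<in> {1..3}" for i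
      using continuous_on_subset[OF sol_regular(1)[OF geom sol that] sub]
      by (simp add: case_prod_beta)
    thus ?thesis by (intro continuous_intros) auto
  qed
  have cm: "continuous_on {0..T} m" for T
    using param_cont[OF op bd, of 0 T "\<lambda>p. \<Sum>i\<in>{1..3}. (u i (fst p) (snd p))\<^sup>2"] cu2 \<Omega>_def
    by (simp add: m_def)
  define qm where "qm = Max (q ` {1..3})"
  have qm: "q i \<le> qm" if "i \<in> {1..3}" for i unfolding qm_def using that by (intro Max_ge) auto
  have qm0: "0 < qm" using qm[of 1] qpos by force
  have L0: "0 \<le> L2_sq (dom g) (\<lambda>i. u i 0)" unfolding L2_sq_def by (rule set_int_nonneg) (auto intro: sum_nonneg)
  have V0: "V 0 \<le> qm * L2_sq (dom g) (\<lambda>i. u i 0)"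
  proof -
    have c0: "continuous_on (closure (dom g)) (u i 0)" if "i \<in> {1..3}" for i
      using sol_slices(1)[OF geom sol _ that] by simp
    have i1: "set_integrable lborel \<Omega> (\<lambda>x. \<Sum>i\<in>{1..3}. q i * (u i 0 x)\<^sup>2)"
      unfolding \<Omega>_def by (intro sint_cont dom_open dom_bounded geom continuous_intros c0; simp)
    have i2: "set_integrable lborel \<Omega> (\<lambda>x. \<Sum>i\<in>{1..3}. (u i 0 x)\<^sup>2)"
      unfolding \<Omega>_def by (intro sint_cont dom_open dom_bounded geom continuous_intros c0; simp)
    have "V 0 \<le> (LINT x:\<Omega>|lborel. qm * (\<Sum>i\<in>{1..3}. (u i 0 x)\<^sup>2))"
      unfolding V_def
    proof (rule set_integral_mono[OF i1])
      show "set_integrable lborel \<Omega> (\<lambda>x. qm * (\<Sum>i\<in>{1..3}. (u i 0 x)\<^sup>2))"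
        using set_integrable_mult_right[OF i2] by simp
      fix x show "(\<Sum>i\<in>{1..3}. q i * (u i 0 x)\<^sup>2) \<le> qm * (\<Sum>i\<in>{1..3}. (u i 0 x)\<^sup>2)"
        unfolding sum_distrib_left by (rule sum_mono) (use qm in \<open>auto intro: mult_right_mono\<close>)
    qed
    also have "\<dots> = qm * L2_sq (dom g) (\<lambda>i. u i 0)"
      by (simp add: set_integral_mult_right L2_sq_def \<Omega>_def)
    finally show ?thesis .
  qed
  have bnd: "integral {0..T} m \<le> qm * L2_sq (dom g) (\<lambda>i. u i 0)" if T0: "0 \<le> T" for T
  proof -
    have E: "V T - V 0 = integral {0..T} W"
      using energy_sol(1)[OF geom sol T0, of q] unfolding V_def W_def \<Omega>_def .
    have cW: "continuous_on {0..T} W"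
      using energy_sol(2)[OF geom sol T0, of q] unfolding W_def \<Omega>_def .
    have "integral {0..T} W \<le> integral {0..T} (\<lambda>s. -2 * m s)"
    proof (rule integral_le)
      show "W integrable_on {0..T}" by (rule integrable_continuous_real[OF cW])
      show "(\<lambda>s. -2 * m s) integrable_on {0..T}"
        by (rule integrable_continuous_real) (intro continuous_intros cm)
      show "W s \<le> -2 * m s" if "s \<in> {0..T}" for s using WI that by auto
    qed
    also have "\<dots> = -2 * integral {0..T} m" by (simp add: integral_mult_left)
    finally have I: "integral {0..T} W \<le> -2 * integral {0..T} m" .
    have "0 \<le> V T" unfolding V_def
      by (rule set_int_nonneg) (use qpos in \<open>auto intro!: sum_nonneg\<close>)
    hence "2 * integral {0..T} m \<le> V 0" using E I by linarith
    thus ?thesis using V0 qm0 L0 by (smt (verit) mult_nonneg_nonneg)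
  qed
  have "L2st_sq_vec (dom g) u \<le> ennreal (qm * L2_sq (dom g) (\<lambda>i. u i 0))"
  proof -
    have "(\<integral>\<^sup>+ t\<in>{0..}. (\<integral>\<^sup>+ x\<in>\<Omega>. ennreal ((\<lambda>p. \<Sum>i\<in>{1..3}. (u i (fst p) (snd p))\<^sup>2) (t,x)) \<partial>lborel) \<partial>lborel)
        \<le> ennreal (qm * L2_sq (dom g) (\<lambda>i. u i 0))"
    proof (rule L2st_bound[OF op bd])
      show "continuous_on ({0..T} \<times> closure \<Omega>) (\<lambda>p. \<Sum>i\<in>{1..3}. (u i (fst p) (snd p))\<^sup>2)" for T
        using cu2 \<Omega>_def by simp
      show "0 \<le> (\<lambda>p. \<Sum>i\<in>{1..3}. (u i (fst p) (snd p))\<^sup>2) (t,x)" for t x by (auto intro: sum_nonneg)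
      fix T :: real assume "0 \<le> T"
      thus "ennreal (integral {0..T} (\<lambda>s. LINT x:\<Omega>|lborel. (\<lambda>p. \<Sum>i\<in>{1..3}. (u i (fst p) (snd p))\<^sup>2) (s,x)))
          \<le> ennreal (qm * L2_sq (dom g) (\<lambda>i. u i 0))"
        using bnd[of T] by (simp add: m_def[abs_def] ennreal_leI)
    qed
    thus ?thesis by (simp add: L2st_sq_vec_def \<Omega>_def)
  qed
  thus "L2st_sq_vec (dom g) u \<le> ennreal (Max (q ` {1..3})) * ennreal (L2_sq (dom g) (\<lambda>i. u i 0))"
    using qm0 L0 by (simp add: qm_def ennreal_mult)
qed

lemma part2:
  fixes g Rey F U G Pt C q \<eta>
  assumes geom: "valid_geometry g" and Re: "0 < Rey"
    and base: "base_flow g Rey F U G Pt" and poinc: "poincare_const g C"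
    and qpos: "\<forall>i\<in>{1..3}. 0 < q i" and q23: "q 2 = q 3"
    and hyp: "\<forall>u p d. solution g Rey F U u p d \<longrightarrow>
        (\<forall>t\<ge>0. 0 \<le> (\<Sum>i\<in>{1..3}. LINT x:dom g|lborel.
            (q i * C / Rey - 1) * (u i t x)\<^sup>2
            + q i * (\<Sum>j\<in>{1..3}. U j x * u i t x * dx j (u i) t x)
            + q i * (\<Sum>j\<in>{1..3}. u j t x * u i t x * sdx j (U i) x)
            - q i * u i t x * (\<Sum>j\<in>{1..3}. F i j * u j t x)
            - q i * u i t x * d i t x
            + (\<eta> i)\<^sup>2 * (d i t x)\<^sup>2))"
  shows "\<forall>u p d. solution g Rey F U u p d \<and> (\<forall>i\<in>{1..3}. \<forall>x\<in>dom g. u i 0 x = 0) \<longrightarrow>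
           L2st_sq_vec (dom g) u \<le> (\<Sum>i\<in>{1..3}. ennreal ((\<eta> i)\<^sup>2) * L2st_sq (dom g) (d i))"
proof (intro allI impI, elim conjE)
  fix u p d
  assume sol: "solution g Rey F U u p d" and u0: "\<forall>i\<in>{1..3}. \<forall>x\<in>dom g. u i 0 x = 0"
  define \<Omega> where "\<Omega> = dom g"
  have op: "open \<Omega>" and bd: "bounded \<Omega>" using geom dom_open dom_bounded \<Omega>_def by auto
  define m where "m s = (LINT x:\<Omega>|lborel. (\<Sum>i\<in>{1..3}. (u i s x)\<^sup>2))" for s
  define Id where "Id i s = (LINT x:\<Omega>|lborel. (d i s x)\<^sup>2)" for i s
  define V where "V s = (LINT x:\<Omega>|lborel. (\<Sum>i\<in>{1..3}. q i * (u i s x)\<^sup>2))" for s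
  define W where "W s = (LINT x:\<Omega>|lborel. (\<Sum>i\<in>{1..3}. 2 * q i * u i s x * dt (u i) s x))" for s
  have WI: "W s \<le> - 2 * m s + 2 * (\<Sum>i\<in>{1..3}. (\<eta> i)\<^sup>2 * Id i s)" if s0: "0 \<le> s" for s
  proof -
    note cu = sol_slices(1)[OF geom sol s0] and cd = sol_slices(2)[OF geom sol s0]
    note cdx = sol_regular(5)[OF geom sol _ s0]
    note cU = base_cont(1)[OF geom base] and csU = base_cont(2)[OF geom base]
    define Hy where "Hy i x = (q i * C / Rey - 1) * (u i s x)\<^sup>2
            + q i * (\<Sum>j\<in>{1..3}. U j x * u i s x * dx j (u i) s x)
            + q i * (\<Sum>j\<in>{1..3}. u j s x * u i s x * sdx j (U i) x)
            - q i * u i s x * (\<Sum>j\<in>{1..3}. F i j * u j s x)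
            - q i * u i s x * d i s x
            + (\<eta> i)\<^sup>2 * (d i s x)\<^sup>2" for i x
    define Q where "Q i x = q i * C / Rey * (u i s x)\<^sup>2
          + q i * (\<Sum>j\<in>{1..3}. U j x * u i s x * dx j (u i) s x)
          + q i * (\<Sum>j\<in>{1..3}. u j s x * u i s x * sdx j (U i) x)
          - q i * u i s x * (\<Sum>j\<in>{1..3}. F i j * u j s x)
          - q i * u i s x * d i s x" for i x
    have iHy: "set_integrable lborel \<Omega> (Hy i)" if i: "i \<in> {1..3}" for i
      unfolding Hy_def[abs_def] \<Omega>_def
      by (intro sint_cont dom_open dom_bounded geom continuous_intros cu cd cdx cU csU i; simp)
    have iu: "set_integrable lborel \<Omega> (\<lambda>x. (u i s x)\<^sup>2)" if i: "i \<in> {1..3}" for i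
      unfolding \<Omega>_def by (intro sint_cont dom_open dom_bounded geom continuous_intros cu i)
    have id: "set_integrable lborel \<Omega> (\<lambda>x. (\<eta> i)\<^sup>2 * (d i s x)\<^sup>2)" if i: "i \<in> {1..3}" for i
      unfolding \<Omega>_def by (intro sint_cont dom_open dom_bounded geom continuous_intros cd i)
    have QH: "(LINT x:\<Omega>|lborel. Q i x) = (LINT x:\<Omega>|lborel. Hy i x) + (LINT x:\<Omega>|lborel. (u i s x)\<^sup>2)
          - (\<eta> i)\<^sup>2 * Id i s"
      if i: "i \<in> {1..3}" for i
    proof -
      have "(LINT x:\<Omega>|lborel. Q i x) = (LINT x:\<Omega>|lborel. Hy i x + (u i s x)\<^sup>2 - (\<eta> i)\<^sup>2 * (d i s x)\<^sup>2)"
        by (rule set_lebesgue_integral_cong) (use op in \<open>auto simp: Q_def Hy_def algebra_simps\<close>)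
      also have "\<dots> = (LINT x:\<Omega>|lborel. Hy i x) + (LINT x:\<Omega>|lborel. (u i s x)\<^sup>2)
          - (LINT x:\<Omega>|lborel. (\<eta> i)\<^sup>2 * (d i s x)\<^sup>2)"
        using set_integral_diff(2)[OF set_integral_add(1)[OF iHy[OF i] iu[OF i]] id[OF i]]
          set_integral_add(2)[OF iHy[OF i] iu[OF i]] by simp
      finally show ?thesis by (simp add: Id_def set_integral_mult_right)
    qed
    have H: "0 \<le> (\<Sum>i\<in>{1..3}. LINT x:\<Omega>|lborel. Hy i x)"
      using hyp sol s0 unfolding Hy_def \<Omega>_def by blast
    have M: "(LINT x:\<Omega>|lborel. (\<Sum>i\<in>{1..3}. q i * u i s x * dt (u i) s x)) \<le> - (\<Sum>i\<in>{1..3}. LINT x:\<Omega>|lborel. Q i x)"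
      using master[OF geom Re base poinc qpos q23 sol s0] unfolding Q_def \<Omega>_def .
    have "(\<Sum>i\<in>{1..3}. LINT x:\<Omega>|lborel. Q i x)
        = (\<Sum>i\<in>{1..3}. LINT x:\<Omega>|lborel. Hy i x) + m s - (\<Sum>i\<in>{1..3}. (\<eta> i)\<^sup>2 * Id i s)"
      using QH sint_sum3[of lborel \<Omega> "\<lambda>i x. (u i s x)\<^sup>2"] iu by (simp add: sum.distrib sum_subtractf m_def)
    hence "(LINT x:\<Omega>|lborel. (\<Sum>i\<in>{1..3}. q i * u i s x * dt (u i) s x)) \<le> - m s + (\<Sum>i\<in>{1..3}. (\<eta> i)\<^sup>2 * Id i s)"
      using M H by linarith
    thus ?thesis unfolding W_def W_eq by simp
  qed
  have sub: "{0..T} \<times> closure (dom g) \<subseteq> {0..} \<times> closure (dom g)" for T by auto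
  have cu2: "continuous_on ({0..T} \<times> closure (dom g)) (\<lambda>p. \<Sum>i\<in>{1..3}. (u i (fst p) (snd p))\<^sup>2)" for T
  proof -
    have "continuous_on ({0..T} \<times> closure (dom g)) (\<lambda>p. u i (fst p) (snd p))" if "i \<in> {1..3}" for i
      using continuous_on_subset[OF sol_regular(1)[OF geom sol that] sub]
      by (simp add: case_prod_beta)
    thus ?thesis by (intro continuous_intros) auto
  qed
  have cd2: "continuous_on ({0..T} \<times> closure (dom g)) (\<lambda>p. (d i (fst p) (snd p))\<^sup>2)" if "i \<in> {1..3}" for T i
  proof -
    have "continuous_on ({0..T} \<times> closure (dom g)) (\<lambda>p. d i (fst p) (snd p))"
      using continuous_on_subset[OF sol_regular(4)[OF geom sol that] sub]
      by (simp add: case_prod_beta)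
    thus ?thesis by (intro continuous_intros)
  qed
  have cm: "continuous_on {0..T} m" for T
    using param_cont[OF op bd, of 0 T "\<lambda>p. \<Sum>i\<in>{1..3}. (u i (fst p) (snd p))\<^sup>2"] cu2 \<Omega>_def
    by (simp add: m_def)
  have cId: "continuous_on {0..T} (Id i)" if "i \<in> {1..3}" for T i
    using param_cont[OF op bd, of 0 T "\<lambda>p. (d i (fst p) (snd p))\<^sup>2"] cd2[OF that] \<Omega>_def
    by (simp add: Id_def[abs_def])
  have bnd: "integral {0..T} m \<le> (\<Sum>i\<in>{1..3}. (\<eta> i)\<^sup>2 * integral {0..T} (Id i))" if T0: "0 \<le> T" for T
  proof -
    have E: "V T - V 0 = integral {0..T} W"
      using energy_sol(1)[OF geom sol T0, of q] unfolding V_def W_def \<Omega>_def .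
    have cW: "continuous_on {0..T} W"
      using energy_sol(2)[OF geom sol T0, of q] unfolding W_def \<Omega>_def .
    have cD: "continuous_on {0..T} (\<lambda>s. \<Sum>i\<in>{1..3}. (\<eta> i)\<^sup>2 * Id i s)"
      by (intro continuous_intros cId) auto
    have "integral {0..T} W \<le> integral {0..T} (\<lambda>s. -2 * m s + 2 * (\<Sum>i\<in>{1..3}. (\<eta> i)\<^sup>2 * Id i s))"
    proof (rule integral_le)
      show "W integrable_on {0..T}" by (rule integrable_continuous_real[OF cW])
      show "(\<lambda>s. -2 * m s + 2 * (\<Sum>i\<in>{1..3}. (\<eta> i)\<^sup>2 * Id i s)) integrable_on {0..T}"
        by (rule integrable_continuous_real) (intro continuous_intros cm cD)
      show "W s \<le> -2 * m s + 2 * (\<Sum>i\<in>{1..3}. (\<eta> i)\<^sup>2 * Id i s)" if "s \<in> {0..T}" for s using WI that by auto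
    qed
    also have "\<dots> = -2 * integral {0..T} m + 2 * integral {0..T} (\<lambda>s. \<Sum>i\<in>{1..3}. (\<eta> i)\<^sup>2 * Id i s)"
    proof -
      have im: "(\<lambda>s. -2 * m s) integrable_on {0..T}"
        by (rule integrable_continuous_real) (intro continuous_intros cm)
      have iD: "(\<lambda>s. 2 * (\<Sum>i\<in>{1..3}. (\<eta> i)\<^sup>2 * Id i s)) integrable_on {0..T}"
        by (rule integrable_continuous_real) (intro continuous_intros cD)
      show ?thesis using integral_add[OF im iD] by (simp add: integral_mult_right)
    qed
    also have "integral {0..T} (\<lambda>s. \<Sum>i\<in>{1..3}. (\<eta> i)\<^sup>2 * Id i s) = (\<Sum>i\<in>{1..3}. (\<eta> i)\<^sup>2 * integral {0..T} (Id i))"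
    proof -
      have "(\<lambda>s. (\<eta> i)\<^sup>2 * Id i s) integrable_on {0..T}" if "i \<in> {1..3}" for i
        by (rule integrable_continuous_real) (intro continuous_intros cId that)
      thus ?thesis by (subst integral_sum) (auto simp: integral_mult_right)
    qed
    finally have I: "integral {0..T} W \<le> -2 * integral {0..T} m + 2 * (\<Sum>i\<in>{1..3}. (\<eta> i)\<^sup>2 * integral {0..T} (Id i))" .
    have "0 \<le> V T" unfolding V_def
      by (rule set_int_nonneg) (use qpos in \<open>auto intro!: sum_nonneg\<close>)
    moreover have "V 0 = 0" unfolding V_def
      using u0 op by (subst set_lebesgue_integral_cong[where g="\<lambda>_. 0"]) (auto simp: \<Omega>_def)
    ultimately show ?thesis using E I by linarith
  qed
  have Id_le: "ennreal (integral {0..T} (Id i)) \<le> L2st_sq (dom g) (d i)" if "i \<in> {1..3}" "0 \<le> T" for i T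
  proof -
    have "ennreal (integral {0..T} (Id i)) =
        (\<integral>\<^sup>+ t\<in>{0..T}. (\<integral>\<^sup>+ x\<in>\<Omega>. ennreal ((\<lambda>p. (d i (fst p) (snd p))\<^sup>2) (t,x)) \<partial>lborel) \<partial>lborel)"
      using nn_conv[OF op bd that(2), of "\<lambda>p. (d i (fst p) (snd p))\<^sup>2"] cd2[OF that(1)] \<Omega>_def
      by (simp add: Id_def[abs_def])
    also have "\<dots> \<le> L2st_sq (dom g) (d i)"
      unfolding L2st_sq_def \<Omega>_def
      by (rule nn_integral_mono) (auto split: split_indicator)
    finally show ?thesis .
  qed
  have "(\<integral>\<^sup>+ t\<in>{0..}. (\<integral>\<^sup>+ x\<in>\<Omega>. ennreal ((\<lambda>p. \<Sum>i\<in>{1..3}. (u i (fst p) (snd p))\<^sup>2) (t,x)) \<partial>lborel) \<partial>lborel)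
        \<le> (\<Sum>i\<in>{1..3}. ennreal ((\<eta> i)\<^sup>2) * L2st_sq (dom g) (d i))"
  proof (rule L2st_bound[OF op bd])
    show "continuous_on ({0..T} \<times> closure \<Omega>) (\<lambda>p. \<Sum>i\<in>{1..3}. (u i (fst p) (snd p))\<^sup>2)" for T
      using cu2 \<Omega>_def by simp
    show "0 \<le> (\<lambda>p. \<Sum>i\<in>{1..3}. (u i (fst p) (snd p))\<^sup>2) (t,x)" for t x by (auto intro: sum_nonneg)
    fix T :: real assume T0: "0 \<le> T"
    have Inn: "0 \<le> integral {0..T} (Id i)" if "i \<in> {1..3}" for i
      by (rule integral_nonneg) (auto simp: Id_def intro!: set_int_nonneg integrable_continuous_real cId that)
    have "ennreal (integral {0..T} m) \<le> ennreal (\<Sum>i\<in>{1..3}. (\<eta> i)\<^sup>2 * integral {0..T} (Id i))"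
      using bnd[OF T0] by (rule ennreal_leI)
    also have "\<dots> = (\<Sum>i\<in>{1..3}. ennreal ((\<eta> i)\<^sup>2) * ennreal (integral {0..T} (Id i)))"
      using Inn by (subst sum_ennreal[symmetric]) (auto simp: ennreal_mult)
    also have "\<dots> \<le> (\<Sum>i\<in>{1..3}. ennreal ((\<eta> i)\<^sup>2) * L2st_sq (dom g) (d i))"
      by (rule sum_mono) (use Id_le T0 in \<open>auto intro: mult_left_mono\<close>)
    finally show "ennreal (integral {0..T} (\<lambda>s. LINT x:\<Omega>|lborel. (\<lambda>p. \<Sum>i\<in>{1..3}. (u i (fst p) (snd p))\<^sup>2) (s,x)))
          \<le> (\<Sum>i\<in>{1..3}. ennreal ((\<eta> i)\<^sup>2) * L2st_sq (dom g) (d i))"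
      by (simp add: m_def[abs_def])
  qed
  thus "L2st_sq_vec (dom g) u \<le> (\<Sum>i\<in>{1..3}. ennreal ((\<eta> i)\<^sup>2) * L2st_sq (dom g) (d i))"
    by (simp add: L2st_sq_vec_def \<Omega>_def)
qed

lemma gronwall:
  fixes V W :: "real \<Rightarrow> real"
  assumes t: "0 < t" and a: "0 < a" and b: "0 \<le> b"
    and eqV: "\<And>s. s \<in> {0..t} \<Longrightarrow> V s = V 0 + integral {0..s} W"
    and cW: "continuous_on {0..t} W"
    and ineq: "\<And>s. 0 \<le> s \<Longrightarrow> s < t \<Longrightarrow> W s \<le> - a * V s + b"
  shows "V t \<le> exp (- a * t) * V 0 + b / a"
proof -
  define c where "c = V 0"
  have eqc: "V s = c + integral {0..s} W" if "s \<in> {0..t}" for s using eqV[OF that] c_def by simp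
  define Z where "Z s = exp (a * s) * (V s - b / a)" for s
  have cI: "continuous_on {0..t} (\<lambda>x. integral {0..x} W)"
    by (rule indefinite_integral_continuous_1[OF integrable_continuous_real[OF cW]])
  have cV: "continuous_on {0..t} V"
  proof -
    have "continuous_on {0..t} (\<lambda>x. c + integral {0..x} W)" by (intro continuous_intros cI)
    thus ?thesis by (rule continuous_on_eq) (use eqc in auto)
  qed
  have dV: "(V has_real_derivative W s) (at s)" if s: "0 < s" "s < t" for s
  proof -
    have "((\<lambda>x. integral {0..x} W) has_real_derivative W s) (at s within {0..t})"
      by (rule integral_has_real_derivative[OF cW]) (use s in auto)
    moreover have "at s within {0..t} = at s"
      by (rule at_within_interior) (use s in auto)
    ultimately have d1: "((\<lambda>x. integral {0..x} W) has_real_derivative W s) (at s)" by simp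
    have d2: "((\<lambda>x. c + integral {0..x} W) has_real_derivative W s) (at s)"
      using DERIV_add[OF DERIV_const d1] by simp
    show ?thesis
      by (rule has_field_derivative_transform_within_open[OF d2, of "{0<..<t}"]) (use s eqc in auto)
  qed
  have "Z t \<le> Z 0"
  proof (rule DERIV_nonpos_imp_decreasing_open[where f=Z and a=0 and b=t])
    show "0 \<le> t" using t by simp
    show "continuous_on {0..t} Z" unfolding Z_def by (intro continuous_intros cV)
    fix s assume s: "0 < s" "s < t"
    have "(Z has_real_derivative exp (a * s) * a * (V s - b / a) + exp (a * s) * W s) (at s)"
      unfolding Z_def by (rule derivative_eq_intros dV[OF s] refl)+ (simp add: algebra_simps)
    moreover have "exp (a * s) * a * (V s - b / a) + exp (a * s) * W s \<le> 0"
    proof -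
      have "exp (a * s) * a * (V s - b / a) + exp (a * s) * W s = exp (a * s) * (a * V s - b + W s)"
        using a by (simp add: field_simps)
      moreover have "a * V s - b + W s \<le> 0" using ineq[of s] s by simp
      ultimately show ?thesis by (simp add: mult_nonneg_nonpos)
    qed
    ultimately show "\<exists>y. (Z has_real_derivative y) (at s) \<and> y \<le> 0" by blast
  qed
  hence "exp (a * t) * (V t - b / a) \<le> V 0 - b / a" by (simp add: Z_def)
  hence "V t - b / a \<le> exp (- a * t) * (V 0 - b / a)"
    by (simp add: exp_minus field_simps)
  moreover have "exp (- a * t) * (b / a) \<ge> 0" using a b by simp
  ultimately show ?thesis by (simp add: algebra_simps)
qed

lemma classK_lin:
  assumes "0 < c" shows "class_K_inf (\<lambda>r. c * r)"
  unfolding class_K_inf_def class_K_def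
proof (intro conjI)
  show "continuous_on {0..} (\<lambda>r. c * r)" by (intro continuous_intros)
  show "strict_mono_on {0..} (\<lambda>r. c * r)" using assms by (auto simp: strict_mono_on_def)
  show "c * 0 = 0" by simp
  show "\<forall>x\<ge>0. 0 \<le> c * x" using assms by simp
  show "\<not> bdd_above ((\<lambda>r. c * r) ` {0..})"
  proof
    assume "bdd_above ((\<lambda>r. c * r) ` {0..})"
    then obtain M where M: "\<And>r. r \<ge> 0 \<Longrightarrow> c * r \<le> M" by (auto simp: bdd_above_def)
    have "c * ((\<bar>M\<bar> + 1) / c) \<le> M" using M[of "(\<bar>M\<bar> + 1) / c"] assms by simp
    thus False using assms by simp
  qed
qed

lemma classK_sqrt:
  assumes k: "0 < k" shows "class_K_inf (\<lambda>r. sqrt (r / k))"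
  unfolding class_K_inf_def class_K_def
proof (intro conjI)
  show "continuous_on {0..} (\<lambda>r. sqrt (r / k))" using k by (intro continuous_intros) auto
  show "strict_mono_on {0..} (\<lambda>r. sqrt (r / k))" using k by (auto simp: strict_mono_on_def divide_strict_right_mono)
  show "sqrt (0 / k) = 0" by simp
  show "\<forall>x\<ge>0. 0 \<le> sqrt (x / k)" using k by simp
  show "\<not> bdd_above ((\<lambda>r. sqrt (r / k)) ` {0..})"
  proof
    assume "bdd_above ((\<lambda>r. sqrt (r / k)) ` {0..})"
    then obtain M where M: "\<And>r. r \<ge> 0 \<Longrightarrow> sqrt (r / k) \<le> M" by (auto simp: bdd_above_def)
    have "sqrt (((\<bar>M\<bar> + 1)\<^sup>2 * k) / k) \<le> M" using M[of "(\<bar>M\<bar> + 1)\<^sup>2 * k"] k by simp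
    thus False using k by simp
  qed
qed

lemma part3:
  fixes g Rey F U G Pt C q \<psi> \<sigma>
  assumes geom: "valid_geometry g" and Re: "0 < Rey"
    and base: "base_flow g Rey F U G Pt" and poinc: "poincare_const g C"
    and qpos: "\<forall>i\<in>{1..3}. 0 < q i" and q23: "q 2 = q 3"
    and psi_pos: "\<forall>i\<in>{1..3}. 0 < \<psi> i" and sigma_K: "class_K \<sigma>"
    and hyp: "\<forall>u p d. solution g Rey F U u p d \<longrightarrow>
        (\<forall>t\<ge>0. 0 \<le> (\<Sum>i\<in>{1..3}. LINT x:dom g|lborel.
            (q i * C / Rey - \<psi> i * q i) * (u i t x)\<^sup>2
            + q i * (\<Sum>j\<in>{1..3}. U j x * u i t x * dx j (u i) t x)
            + q i * (\<Sum>j\<in>{1..3}. u j t x * u i t x * sdx j (U i) x)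
            - q i * u i t x * (\<Sum>j\<in>{1..3}. F i j * u j t x)
            - q i * u i t x * d i t x)
          + (LINT x:dom g|lborel. \<sigma> (vnorm (\<lambda>i. d i t x))))"
  shows "\<exists>\<psi>0 > 0. \<exists>\<beta> \<beta>' \<kappa>. class_K_inf \<beta> \<and> class_K_inf \<beta>' \<and> class_K_inf \<kappa> \<and>
           (\<forall>u p d. solution g Rey F U u p d \<longrightarrow>
              (\<forall>t>0. L2_norm (dom g) (\<lambda>i. u i t)
                 \<le> \<beta> (exp (- \<psi>0 * t) * \<kappa> (L2_norm (dom g) (\<lambda>i. u i 0)))
                   + \<beta>' (Sup ((\<lambda>\<tau>. LINT x:dom g|lborel. \<sigma> (vnorm (\<lambda>i. d i \<tau> x))) ` {0..<t}))))"
proof -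
  define \<psi>m where "\<psi>m = Min (\<psi> ` {1..3})"
  define qn where "qn = Min (q ` {1..3})"
  define qm where "qm = Max (q ` {1..3})"
  have \<psi>m: "\<psi>m \<le> \<psi> i" if "i \<in> {1..3}" for i unfolding \<psi>m_def using that by (intro Min_le) auto
  have \<psi>m0: "0 < \<psi>m" unfolding \<psi>m_def using psi_pos by (subst Min_gr_iff) auto
  have qn: "qn \<le> q i" if "i \<in> {1..3}" for i unfolding qn_def using that by (intro Min_le) auto
  have qn0: "0 < qn" unfolding qn_def using qpos by (subst Min_gr_iff) auto
  have qm: "q i \<le> qm" if "i \<in> {1..3}" for i unfolding qm_def using that by (intro Max_ge) auto
  have qm0: "0 < qm" using qm[of 1] qpos by force
  define \<beta> where "\<beta> = (\<lambda>r::real. sqrt (qm / qn) * r)"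
  define \<beta>' where "\<beta>' = (\<lambda>r::real. sqrt (r / (\<psi>m * qn)))"
  define \<kappa> where "\<kappa> = (\<lambda>r::real. 1 * r)"
  have K1: "class_K_inf \<beta>" unfolding \<beta>_def using qm0 qn0 by (intro classK_lin) simp
  have K2: "class_K_inf \<beta>'" unfolding \<beta>'_def using \<psi>m0 qn0 by (intro classK_sqrt) simp
  have K3: "class_K_inf \<kappa>" unfolding \<kappa>_def by (intro classK_lin) simp
  have main: "L2_norm (dom g) (\<lambda>i. u i t)
         \<le> \<beta> (exp (- \<psi>m * t) * \<kappa> (L2_norm (dom g) (\<lambda>i. u i 0)))
           + \<beta>' (Sup ((\<lambda>\<tau>. LINT x:dom g|lborel. \<sigma> (vnorm (\<lambda>i. d i \<tau> x))) ` {0..<t}))"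
    if sol: "solution g Rey F U u p d" and t0: "0 < t" for u p d t
  proof -
    define \<Omega> where "\<Omega> = dom g"
    have op: "open \<Omega>" and bd: "bounded \<Omega>" using geom dom_open dom_bounded \<Omega>_def by auto
    define V where "V s = (LINT x:\<Omega>|lborel. (\<Sum>i\<in>{1..3}. q i * (u i s x)\<^sup>2))" for s
    define W where "W s = (LINT x:\<Omega>|lborel. (\<Sum>i\<in>{1..3}. 2 * q i * u i s x * dt (u i) s x))" for s
    define S where "S \<tau> = (LINT x:dom g|lborel. \<sigma> (vnorm (\<lambda>i. d i \<tau> x)))" for \<tau>
    have \<sigma>c: "continuous_on {0..} \<sigma>" and \<sigma>nn: "\<And>x. x \<ge> 0 \<Longrightarrow> 0 \<le> \<sigma> x"
      using sigma_K unfolding class_K_def by auto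
    have vn0: "0 \<le> vnorm v" for v by (simp add: vnorm_def sum_nonneg)
    have WI: "W s \<le> - 2 * \<psi>m * V s + 2 * S s" if s0: "0 \<le> s" for s
    proof -
      note cu = sol_slices(1)[OF geom sol s0] and cd = sol_slices(2)[OF geom sol s0]
      note cdx = sol_regular(5)[OF geom sol _ s0]
      note cU = base_cont(1)[OF geom base] and csU = base_cont(2)[OF geom base]
      define Hy where "Hy i x = (q i * C / Rey - \<psi> i * q i) * (u i s x)\<^sup>2
            + q i * (\<Sum>j\<in>{1..3}. U j x * u i s x * dx j (u i) s x)
            + q i * (\<Sum>j\<in>{1..3}. u j s x * u i s x * sdx j (U i) x)
            - q i * u i s x * (\<Sum>j\<in>{1..3}. F i j * u j s x)
            - q i * u i s x * d i s x" for i x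
      define Q where "Q i x = q i * C / Rey * (u i s x)\<^sup>2
          + q i * (\<Sum>j\<in>{1..3}. U j x * u i s x * dx j (u i) s x)
          + q i * (\<Sum>j\<in>{1..3}. u j s x * u i s x * sdx j (U i) x)
          - q i * u i s x * (\<Sum>j\<in>{1..3}. F i j * u j s x)
          - q i * u i s x * d i s x" for i x
      have iHy: "set_integrable lborel \<Omega> (Hy i)" if i: "i \<in> {1..3}" for i
        unfolding Hy_def[abs_def] \<Omega>_def
        by (intro sint_cont dom_open dom_bounded geom continuous_intros cu cd cdx cU csU i; simp)
      have iu: "set_integrable lborel \<Omega> (\<lambda>x. (u i s x)\<^sup>2)" if i: "i \<in> {1..3}" for i
        unfolding \<Omega>_def by (intro sint_cont dom_open dom_bounded geom continuous_intros cu i)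
      define I where "I i = (LINT x:\<Omega>|lborel. (u i s x)\<^sup>2)" for i
      have I0: "0 \<le> I i" for i unfolding I_def by (rule set_int_nonneg) auto
      have QH: "(LINT x:\<Omega>|lborel. Q i x) = (LINT x:\<Omega>|lborel. Hy i x) + \<psi> i * q i * I i"
        if i: "i \<in> {1..3}" for i
      proof -
        have "(LINT x:\<Omega>|lborel. Q i x) = (LINT x:\<Omega>|lborel. Hy i x + \<psi> i * q i * (u i s x)\<^sup>2)"
          by (rule set_lebesgue_integral_cong) (use op in \<open>auto simp: Q_def Hy_def algebra_simps\<close>)
        also have "\<dots> = (LINT x:\<Omega>|lborel. Hy i x) + (LINT x:\<Omega>|lborel. \<psi> i * q i * (u i s x)\<^sup>2)"
          using set_integral_add(2)[OF iHy[OF i] set_integrable_mult_right[OF iu[OF i], of "\<psi> i * q i"]] by simp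
        finally show ?thesis by (simp add: I_def set_integral_mult_right)
      qed
      have H: "0 \<le> (\<Sum>i\<in>{1..3}. LINT x:\<Omega>|lborel. Hy i x) + S s"
        using hyp sol s0 unfolding Hy_def \<Omega>_def S_def by blast
      have M: "(LINT x:\<Omega>|lborel. (\<Sum>i\<in>{1..3}. q i * u i s x * dt (u i) s x)) \<le> - (\<Sum>i\<in>{1..3}. LINT x:\<Omega>|lborel. Q i x)"
        using master[OF geom Re base poinc qpos q23 sol s0] unfolding Q_def \<Omega>_def .
      have VI: "V s = (\<Sum>i\<in>{1..3}. q i * I i)"
      proof -
        have "V s = (\<Sum>i\<in>{1..3}. LINT x:\<Omega>|lborel. q i * (u i s x)\<^sup>2)"
          unfolding V_def using sint_sum3[of lborel \<Omega> "\<lambda>i x. q i * (u i s x)\<^sup>2"]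
            set_integrable_mult_right[OF iu] by simp
        thus ?thesis by (simp add: I_def set_integral_mult_right)
      qed
      have PV: "\<psi>m * V s \<le> (\<Sum>i\<in>{1..3}. \<psi> i * q i * I i)"
        unfolding VI sum_distrib_left
        by (rule sum_mono) (use \<psi>m qpos I0 in \<open>auto intro!: mult_right_mono simp: mult.assoc[symmetric]\<close>)
      have "(\<Sum>i\<in>{1..3}. LINT x:\<Omega>|lborel. Q i x) = (\<Sum>i\<in>{1..3}. LINT x:\<Omega>|lborel. Hy i x) + (\<Sum>i\<in>{1..3}. \<psi> i * q i * I i)"
        using QH by (simp add: sum.distrib)
      hence "(LINT x:\<Omega>|lborel. (\<Sum>i\<in>{1..3}. q i * u i s x * dt (u i) s x)) \<le> - \<psi>m * V s + S s"
        using M H PV by linarith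
      thus ?thesis unfolding W_def W_eq by simp
    qed
    have sub: "{0..T} \<times> closure (dom g) \<subseteq> {0..} \<times> closure (dom g)" for T by auto
    have cS: "continuous_on {0..t} S"
    proof -
      have cd: "continuous_on ({0..t} \<times> closure (dom g)) (\<lambda>p. d i (fst p) (snd p))" if "i \<in> {1..3}" for i
        using continuous_on_subset[OF sol_regular(4)[OF geom sol that] sub] by (simp add: case_prod_beta)
      have cv: "continuous_on ({0..t} \<times> closure (dom g)) (\<lambda>p. vnorm (\<lambda>i. d i (fst p) (snd p)))"
        unfolding vnorm_def by (intro continuous_intros cd) auto
      have "continuous_on ({0..t} \<times> closure (dom g)) (\<lambda>p. \<sigma> (vnorm (\<lambda>i. d i (fst p) (snd p))))"
        by (rule continuous_on_compose2[OF \<sigma>c cv]) (auto simp: vn0)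
      from param_cont[OF dom_open[OF geom] dom_bounded[OF geom] this] show ?thesis
        by (simp add: S_def[abs_def])
    qed
    define \<Sigma> where "\<Sigma> = Sup (S ` {0..<t})"
    have bdd: "bdd_above (S ` {0..<t})"
    proof -
      have "bounded (S ` {0..t})" by (rule compact_imp_bounded[OF compact_continuous_image[OF cS compact_Icc]])
      hence "bdd_above (S ` {0..t})" by (rule bounded_imp_bdd_above)
      thus ?thesis by (rule bdd_above_mono) auto
    qed
    have S\<Sigma>: "S s \<le> \<Sigma>" if "0 \<le> s" "s < t" for s unfolding \<Sigma>_def
      by (rule cSup_upper[OF _ bdd]) (use that in auto)
    have S0: "0 \<le> S 0" unfolding S_def by (rule set_int_nonneg) (use \<sigma>nn vn0 in auto)
    have \<Sigma>0: "0 \<le> \<Sigma>" using S\<Sigma>[of 0] t0 S0 by auto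
    have eqV: "V s = V 0 + integral {0..s} W" if "s \<in> {0..t}" for s
      using energy_sol(1)[OF geom sol, of s q] that unfolding V_def W_def \<Omega>_def by auto
    have cW: "continuous_on {0..t} W"
      using energy_sol(2)[OF geom sol, of t q] t0 unfolding W_def \<Omega>_def by auto
    have G: "V t \<le> exp (- (2 * \<psi>m) * t) * V 0 + (2 * \<Sigma>) / (2 * \<psi>m)"
    proof (rule gronwall[OF t0 _ _ eqV cW])
      show "0 < 2 * \<psi>m" using \<psi>m0 by simp
      show "0 \<le> 2 * \<Sigma>" using \<Sigma>0 by simp
      fix s assume "0 \<le> s" "s < t"
      thus "W s \<le> - (2 * \<psi>m) * V s + 2 * \<Sigma>" using WI[of s] S\<Sigma>[of s] by simp
    qed
    have cu: "continuous_on (closure (dom g)) (u i s)" if "i \<in> {1..3}" "0 \<le> s" for i s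
      using sol_slices(1)[OF geom sol that(2) that(1)] .
    have iu: "set_integrable lborel \<Omega> (\<lambda>x. \<Sum>i\<in>{1..3}. (u i s x)\<^sup>2)" if "0 \<le> s" for s
      unfolding \<Omega>_def by (intro sint_cont dom_open dom_bounded geom continuous_intros cu that; simp)
    have iqu: "set_integrable lborel \<Omega> (\<lambda>x. \<Sum>i\<in>{1..3}. q i * (u i s x)\<^sup>2)" if "0 \<le> s" for s
      unfolding \<Omega>_def by (intro sint_cont dom_open dom_bounded geom continuous_intros cu that; simp)
    have Lt: "qn * L2_sq (dom g) (\<lambda>i. u i t) \<le> V t"
    proof -
      have "qn * L2_sq (dom g) (\<lambda>i. u i t) = (LINT x:\<Omega>|lborel. qn * (\<Sum>i\<in>{1..3}. (u i t x)\<^sup>2))"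
        by (simp add: L2_sq_def \<Omega>_def set_integral_mult_right)
      also have "\<dots> \<le> V t" unfolding V_def
      proof (rule set_integral_mono)
        show "set_integrable lborel \<Omega> (\<lambda>x. qn * (\<Sum>i\<in>{1..3}. (u i t x)\<^sup>2))"
          using set_integrable_mult_right[OF iu[of t]] t0 by simp
        show "set_integrable lborel \<Omega> (\<lambda>x. \<Sum>i\<in>{1..3}. q i * (u i t x)\<^sup>2)" using iqu[of t] t0 by simp
        fix x show "qn * (\<Sum>i\<in>{1..3}. (u i t x)\<^sup>2) \<le> (\<Sum>i\<in>{1..3}. q i * (u i t x)\<^sup>2)"
          unfolding sum_distrib_left by (rule sum_mono) (use qn in \<open>auto intro: mult_right_mono\<close>)
      qed
      finally show ?thesis .
    qed
    have L0: "V 0 \<le> qm * L2_sq (dom g) (\<lambda>i. u i 0)"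
    proof -
      have "V 0 \<le> (LINT x:\<Omega>|lborel. qm * (\<Sum>i\<in>{1..3}. (u i 0 x)\<^sup>2))"
        unfolding V_def
      proof (rule set_integral_mono[OF iqu])
        show "set_integrable lborel \<Omega> (\<lambda>x. qm * (\<Sum>i\<in>{1..3}. (u i 0 x)\<^sup>2))"
          using set_integrable_mult_right[OF iu[of 0]] by simp
        fix x show "(\<Sum>i\<in>{1..3}. q i * (u i 0 x)\<^sup>2) \<le> qm * (\<Sum>i\<in>{1..3}. (u i 0 x)\<^sup>2)"
          unfolding sum_distrib_left by (rule sum_mono) (use qm in \<open>auto intro: mult_right_mono\<close>)
      qed simp
      also have "\<dots> = qm * L2_sq (dom g) (\<lambda>i. u i 0)"
        by (simp add: set_integral_mult_right L2_sq_def \<Omega>_def)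
      finally show ?thesis .
    qed
    define A where "A = L2_sq (dom g) (\<lambda>i. u i 0)"
    have A0: "0 \<le> A" unfolding A_def L2_sq_def by (rule set_int_nonneg) (auto intro: sum_nonneg)
    have Bt: "L2_sq (dom g) (\<lambda>i. u i t) \<le> exp (- (2 * \<psi>m) * t) * (qm / qn) * A + \<Sigma> / (\<psi>m * qn)"
    proof -
      define E where "E = exp (- (2 * \<psi>m) * t)"
      have E0: "0 < E" by (simp add: E_def)
      have "E * V 0 \<le> E * (qm * A)" using L0 E0 unfolding A_def by (simp add: mult_left_mono)
      moreover have "(2 * \<Sigma>) / (2 * \<psi>m) = \<Sigma> / \<psi>m" by simp
      ultimately have "qn * L2_sq (dom g) (\<lambda>i. u i t) \<le> E * (qm * A) + \<Sigma> / \<psi>m"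
        using Lt G unfolding E_def by linarith
      hence "L2_sq (dom g) (\<lambda>i. u i t) \<le> (E * (qm * A) + \<Sigma> / \<psi>m) / qn"
        using qn0 by (simp add: pos_le_divide_eq mult.commute)
      also have "\<dots> = E * (qm / qn) * A + \<Sigma> / (\<psi>m * qn)"
        using qn0 \<psi>m0 by (simp add: add_divide_distrib)
      finally show ?thesis unfolding E_def .
    qed
    have e2: "sqrt (exp (- (2 * \<psi>m) * t)) = exp (- \<psi>m * t)"
    proof -
      have "exp (- (2 * \<psi>m) * t) = (exp (- \<psi>m * t))\<^sup>2" by (simp add: power2_eq_square flip: exp_add)
      thus ?thesis by simp
    qed
    have "L2_norm (dom g) (\<lambda>i. u i t) \<le> sqrt (exp (- (2 * \<psi>m) * t) * (qm / qn) * A + \<Sigma> / (\<psi>m * qn))"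
      unfolding L2_norm_def using Bt by (rule real_sqrt_le_mono)
    also have "\<dots> \<le> sqrt (exp (- (2 * \<psi>m) * t) * (qm / qn) * A) + sqrt (\<Sigma> / (\<psi>m * qn))"
      by (rule sqrt_add_le_add_sqrt) (use A0 qm0 qn0 \<psi>m0 \<Sigma>0 in auto)
    also have "sqrt (exp (- (2 * \<psi>m) * t) * (qm / qn) * A) = sqrt (qm / qn) * (exp (- \<psi>m * t) * L2_norm (dom g) (\<lambda>i. u i 0))"
      by (simp only: real_sqrt_mult e2) (simp add: L2_norm_def A_def ac_simps)
    finally show ?thesis by (simp add: \<beta>_def \<beta>'_def \<kappa>_def \<Sigma>_def S_def)
  qed
  show ?thesis using \<psi>m0 K1 K2 K3 main by blast
qed

theorem corollaryB1:
  fixes g :: geometry and Rey :: real and F :: "nat \<Rightarrow> nat \<Rightarrow> real"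
    and U :: "nat \<Rightarrow> real \<times> real \<Rightarrow> real" and G :: real and Pt :: "real \<times> real \<Rightarrow> real"
    and C :: real and q \<psi> \<eta> :: "nat \<Rightarrow> real" and \<sigma> :: "real \<Rightarrow> real"
  assumes geom: "valid_geometry g"
    and Re_pos: "0 < Rey"
    and base: "base_flow g Rey F U G Pt"
    and C_pos: "0 < C"
    and poincare: "poincare_const g C"
    and q_pos: "\<forall>i\<in>{1..3}. 0 < q i"
    and q23: "q 2 = q 3"
    and psi_pos: "\<forall>i\<in>{1..3}. 0 < \<psi> i"
    and eta_pos: "\<forall>i\<in>{1..3}. 0 < \<eta> i"
    and sigma_K: "class_K \<sigma>"
  shows
   "((\<forall>u p d. solution g Rey F U u p d \<and> (\<forall>i\<in>{1..3}. \<forall>t\<ge>0. \<forall>x\<in>dom g. d i t x = 0) \<longrightarrow>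
        (\<forall>t\<ge>0. 0 \<le> (\<Sum>i\<in>{1..3}. LINT x:dom g|lborel.
            (q i * C / Rey - 1) * (u i t x)\<^sup>2
            + q i * (\<Sum>j\<in>{1..3}. U j x * u i t x * dx j (u i) t x)
            + q i * (\<Sum>j\<in>{1..3}. u j t x * u i t x * sdx j (U i) x)
            - q i * u i t x * (\<Sum>j\<in>{1..3}. F i j * u j t x))))
     \<longrightarrow> (\<forall>u p d. solution g Rey F U u p d \<and> (\<forall>i\<in>{1..3}. \<forall>t\<ge>0. \<forall>x\<in>dom g. d i t x = 0) \<longrightarrow>
           L2st_sq_vec (dom g) u \<le> ennreal (Max (q ` {1..3})) * ennreal (L2_sq (dom g) (\<lambda>i. u i 0))))
  \<and>
   ((\<forall>u p d. solution g Rey F U u p d \<longrightarrow>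
        (\<forall>t\<ge>0. 0 \<le> (\<Sum>i\<in>{1..3}. LINT x:dom g|lborel.
            (q i * C / Rey - 1) * (u i t x)\<^sup>2
            + q i * (\<Sum>j\<in>{1..3}. U j x * u i t x * dx j (u i) t x)
            + q i * (\<Sum>j\<in>{1..3}. u j t x * u i t x * sdx j (U i) x)
            - q i * u i t x * (\<Sum>j\<in>{1..3}. F i j * u j t x)
            - q i * u i t x * d i t x
            + (\<eta> i)\<^sup>2 * (d i t x)\<^sup>2)))
     \<longrightarrow> (\<forall>u p d. solution g Rey F U u p d \<and> (\<forall>i\<in>{1..3}. \<forall>x\<in>dom g. u i 0 x = 0) \<longrightarrow>
           L2st_sq_vec (dom g) u \<le> (\<Sum>i\<in>{1..3}. ennreal ((\<eta> i)\<^sup>2) * L2st_sq (dom g) (d i))))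
  \<and>
   ((\<forall>u p d. solution g Rey F U u p d \<longrightarrow>
        (\<forall>t\<ge>0. 0 \<le> (\<Sum>i\<in>{1..3}. LINT x:dom g|lborel.
            (q i * C / Rey - \<psi> i * q i) * (u i t x)\<^sup>2
            + q i * (\<Sum>j\<in>{1..3}. U j x * u i t x * dx j (u i) t x)
            + q i * (\<Sum>j\<in>{1..3}. u j t x * u i t x * sdx j (U i) x)
            - q i * u i t x * (\<Sum>j\<in>{1..3}. F i j * u j t x)
            - q i * u i t x * d i t x)
          + (LINT x:dom g|lborel. \<sigma> (vnorm (\<lambda>i. d i t x)))))
     \<longrightarrow> (\<exists>\<psi>0 > 0. \<exists>\<beta> \<beta>' \<kappa>. class_K_inf \<beta> \<and> class_K_inf \<beta>' \<and> class_K_inf \<kappa> \<and>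
           (\<forall>u p d. solution g Rey F U u p d \<longrightarrow>
              (\<forall>t>0. L2_norm (dom g) (\<lambda>i. u i t)
                 \<le> \<beta> (exp (- \<psi>0 * t) * \<kappa> (L2_norm (dom g) (\<lambda>i. u i 0)))
                   + \<beta>' (Sup ((\<lambda>\<tau>. LINT x:dom g|lborel. \<sigma> (vnorm (\<lambda>i. d i \<tau> x))) ` {0..<t}))))))"
proof -
  note p1 = part1[OF geom Re_pos base poincare q_pos q23]
  note p2 = part2[OF geom Re_pos base poincare q_pos q23]
  note p3 = part3[OF geom Re_pos base poincare q_pos q23 psi_pos sigma_K]
  show ?thesis using p1 p2 p3 by blast
qed

end
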